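(* Let $\mathcal H$ be a finite-dimensional Hilbert space, $\mathcal B\subseteq\mathcal L(\mathcal H)$ a Von Neumann algebra, and $\chi:\mathcal H\to\mathcal H_L^\chi\otimes\mathcal H_R^\chi$ a lean splitting map with $\mathrm{stloc}_R(\chi)=\mathcal B$. Then there exists an isometry $U$ such that $\mathrm{Tr}_\chi(X)=U\,\mathrm{Tr}_{\mathcal B}(X)\,U^\dagger$ for all $X\in\mathcal L(\mathcal H)$.
   Context: All Hilbert spaces are finite-dimensional and complex. A Von Neumann algebra on $\mathcal H$ is a $*$-subalgebra of $\mathcal L(\mathcal H)$ closed under adjoint and containing $\mathbb 1$; $\mathcal C'$ is the commutant and $\mathcal Z(\mathcal C)=\mathcal C\cap\mathcal C'$. A splitting map on $\mathcal H$ is an isometry $\chi:\mathcal H\to\mathcal H_L^\chi\otimes\mathcal H_R^\chi$; $\pi^\chi=\chi\chi^\dagger$. $B\in\mathcal L(\mathcal H_L^\chi)$ is left $\chi$-consistent if $\pi^\chi(B\otimes\mathbb 1)=(B\otimes\mathbb 1)\pi^\chi$ (set $\mathrm{cons}_L(\chi)$); $A\in\mathcal L(\mathcal H)$ is strictly left $\chi$-local if there is $\tilde A\in\mathcal L(\mathcal H_L^\chi)$ with $A\chi^\dagger=\chi^\dagger(\tilde A\otimes\mathbb 1)$ and $\chi A=(\tilde A\otimes\mathbb 1)\chi$ (set $\mathrm{stloc}_L(\chi)$). Right versions $\mathrm{cons}_R(\chi)$, $\mathrm{stloc}_R(\chi)$ are defined symmetrically on $\mathcal H_R^\chi$. $\chi$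 is balanced if $\mathrm{stloc}_R(\chi)=\mathrm{stloc}_L(\chi)'$, and lean if balanced with $\mathrm{cons}_L(\chi)'=\mathcal Z(\mathrm{cons}_L(\chi))$ in $\mathcal L(\mathcal H_L^\chi)$ and $\mathrm{cons}_R(\chi)'=\mathcal Z(\mathrm{cons}_R(\chi))$ in $\mathcal L(\mathcal H_R^\chi)$. The $\chi$-trace is $\mathrm{Tr}_\chi:\mathcal L(\mathcal H)\to\mathcal L(\mathcal H_L^\chi)$, $\mathrm{Tr}_\chi(X)=\mathrm{Tr}_{\mathcal H_R^\chi}(\chi X\chi^\dagger)$. Trace over the algebra $\mathcal B$: take a unitary $V:\mathcal H\to\bigoplus_i(\mathcal H_L^i\otimes\mathcal H_R^i)$ with $V\mathcal B'V^\dagger=\bigoplus_i\mathcal L(\mathcal H_L^i)\otimes\mathbb 1_{\mathcal H_R^i}$ (Artin–Wedderburn; then $V\mathcal BV^\dagger=\bigoplus_i\mathbb 1\otimes\mathcal L(\mathcal H_R^i)$). Identifying $\mathcal H$ with $\bigoplus_i(\mathcal H_L^i\otimes\mathcal H_R^i)$ via $V$, $\mathrm{Tr}_{\mathcal B}:\mathcal L(\mathcal H)\to\bigoplus_i\mathcal L(\mathcal H_L^i)$ is $\mathrm{Tr}_{\mathcal B}(X)=\bigoplus_i\mathrm{Tr}_{\mathcal H_R^i}(\pi_iX\pi_i)$ where $\pi_i$ projects onto $\mathcal H_L^i\otimes\mathcal H_R^i$. *)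

theory Defs
  imports "Jordan_Normal_Form.Schur_Decomposition"
begin

(* Conventions:
   H = C^n, H_L^chi = C^a, H_R^chi = C^b, operators are complex matrices.
   The tensor product C^a (x) C^b is identified with C^(a*b) via the index
   (p,q) |-> p*b + q  (p < a, q < b). *)

abbreviation adj :: "complex mat \<Rightarrow> complex mat" where
  "adj A \<equiv> mat_adjoint A"

definition isometry :: "nat \<Rightarrow> nat \<Rightarrow> complex mat \<Rightarrow> bool" where
  "isometry m n U \<longleftrightarrow> U \<in> carrier_mat m n \<and> adj U * U = 1\<^sub>m n"

definition unitary_mat :: "nat \<Rightarrow> complex mat \<Rightarrow> bool" where
  "unitary_mat n U \<longleftrightarrow> isometry n n U \<and> U * adj U = 1\<^sub>m n"

(* Von Neumann algebra on C^n (finite dim.): unital *-subalgebra *)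
definition vn_algebra :: "nat \<Rightarrow> complex mat set \<Rightarrow> bool" where
  "vn_algebra n \<B> \<longleftrightarrow> \<B> \<subseteq> carrier_mat n n \<and> 1\<^sub>m n \<in> \<B> \<and>
     (\<forall>A\<in>\<B>. \<forall>B\<in>\<B>. A + B \<in> \<B> \<and> A * B \<in> \<B>) \<and>
     (\<forall>c. \<forall>A\<in>\<B>. c \<cdot>\<^sub>m A \<in> \<B>) \<and> (\<forall>A\<in>\<B>. adj A \<in> \<B>)"

definition commutant :: "nat \<Rightarrow> complex mat set \<Rightarrow> complex mat set" where
  "commutant n \<C> = {A \<in> carrier_mat n n. \<forall>B\<in>\<C>. A * B = B * A}"

definition center :: "nat \<Rightarrow> complex mat set \<Rightarrow> complex mat set" where
  "center n \<C> = \<C> \<inter> commutant n \<C>"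

(* B (x) 1_b  for B an a x a matrix *)
definition tensor_id_right :: "nat \<Rightarrow> nat \<Rightarrow> complex mat \<Rightarrow> complex mat" where
  "tensor_id_right a b B = mat (a*b) (a*b)
     (\<lambda>(i,j). if i mod b = j mod b then B $$ (i div b, j div b) else 0)"

(* 1_a (x) C  for C a b x b matrix *)
definition tensor_id_left :: "nat \<Rightarrow> nat \<Rightarrow> complex mat \<Rightarrow> complex mat" where
  "tensor_id_left a b C = mat (a*b) (a*b)
     (\<lambda>(i,j). if i div b = j div b then C $$ (i mod b, j mod b) else 0)"

definition ptrace_right :: "nat \<Rightarrow> nat \<Rightarrow> complex mat \<Rightarrow> complex mat" where
  "ptrace_right a b M = mat a a (\<lambda>(i,j). \<Sum>q<b. M $$ (i*b + q, j*b + q))"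

definition splitting_map :: "nat \<Rightarrow> nat \<Rightarrow> nat \<Rightarrow> complex mat \<Rightarrow> bool" where
  "splitting_map n a b \<chi> \<longleftrightarrow> isometry (a*b) n \<chi>"

definition cons_L :: "nat \<Rightarrow> nat \<Rightarrow> complex mat \<Rightarrow> complex mat set" where
  "cons_L a b \<chi> = {B \<in> carrier_mat a a.
      (\<chi> * adj \<chi>) * tensor_id_right a b B = tensor_id_right a b B * (\<chi> * adj \<chi>)}"

definition cons_R :: "nat \<Rightarrow> nat \<Rightarrow> complex mat \<Rightarrow> complex mat set" where
  "cons_R a b \<chi> = {C \<in> carrier_mat b b.
      (\<chi> * adj \<chi>) * tensor_id_left a b C = tensor_id_left a b C * (\<chi> * adj \<chi>)}"

definition stloc_L :: "nat \<Rightarrow> nat \<Rightarrow> nat \<Rightarrow> complex mat \<Rightarrow> complex mat set" where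
  "stloc_L n a b \<chi> = {A \<in> carrier_mat n n. \<exists>At \<in> carrier_mat a a.
      A * adj \<chi> = adj \<chi> * tensor_id_right a b At \<and> \<chi> * A = tensor_id_right a b At * \<chi>}"

definition stloc_R :: "nat \<Rightarrow> nat \<Rightarrow> nat \<Rightarrow> complex mat \<Rightarrow> complex mat set" where
  "stloc_R n a b \<chi> = {A \<in> carrier_mat n n. \<exists>At \<in> carrier_mat b b.
      A * adj \<chi> = adj \<chi> * tensor_id_left a b At \<and> \<chi> * A = tensor_id_left a b At * \<chi>}"

definition balanced :: "nat \<Rightarrow> nat \<Rightarrow> nat \<Rightarrow> complex mat \<Rightarrow> bool" where
  "balanced n a b \<chi> \<longleftrightarrow> stloc_R n a b \<chi> = commutant n (stloc_L n a b \<chi>)"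

definition lean :: "nat \<Rightarrow> nat \<Rightarrow> nat \<Rightarrow> complex mat \<Rightarrow> bool" where
  "lean n a b \<chi> \<longleftrightarrow> balanced n a b \<chi> \<and>
     commutant a (cons_L a b \<chi>) = center a (cons_L a b \<chi>) \<and>
     commutant b (cons_R a b \<chi>) = center b (cons_R a b \<chi>)"

definition chi_trace :: "nat \<Rightarrow> nat \<Rightarrow> complex mat \<Rightarrow> complex mat \<Rightarrow> complex mat" where
  "chi_trace a b \<chi> X = ptrace_right a b (\<chi> * X * adj \<chi>)"

(* A decomposition is given by k blocks with dimensions
   dL i, dR i (i < k); block i of  (+)_i C^(dL i) (x) C^(dR i)  occupies the
   coordinates  offset i, ..., offset i + dL i * dR i - 1. *)
definition offs :: "(nat \<Rightarrow> nat) \<Rightarrow> nat \<Rightarrow> nat" where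
  "offs d i = (\<Sum>j<i. d j)"

definition embed :: "nat \<Rightarrow> nat \<Rightarrow> nat \<Rightarrow> complex mat" where
  "embed N off d = mat N d (\<lambda>(r,c). if r = off + c then 1 else 0)"

definition mat_sum :: "nat \<Rightarrow> nat \<Rightarrow> (nat \<Rightarrow> complex mat) \<Rightarrow> nat \<Rightarrow> complex mat" where
  "mat_sum N M f k = mat N M (\<lambda>(r,c). \<Sum>i<k. f i $$ (r,c))"

(* (+)_i (A i (x) 1_{dR i}) as an operator on C^n, n = sum_i dL i * dR i *)
definition blockdiag_tensor_id ::
  "nat \<Rightarrow> (nat \<Rightarrow> nat) \<Rightarrow> (nat \<Rightarrow> nat) \<Rightarrow> (nat \<Rightarrow> complex mat) \<Rightarrow> complex mat" where
  "blockdiag_tensor_id k dL dR A =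
     (let n = (\<Sum>i<k. dL i * dR i); P = (\<lambda>i. dL i * dR i) in
      mat_sum n n (\<lambda>i. embed n (offs P i) (P i) * tensor_id_right (dL i) (dR i) (A i)
                        * adj (embed n (offs P i) (P i))) k)"

definition AW_decomposition ::
  "nat \<Rightarrow> complex mat set \<Rightarrow> nat \<Rightarrow> (nat \<Rightarrow> nat) \<Rightarrow> (nat \<Rightarrow> nat) \<Rightarrow> complex mat \<Rightarrow> bool" where
  "AW_decomposition n \<B> k dL dR V \<longleftrightarrow>
     (\<forall>i<k. 0 < dL i \<and> 0 < dR i) \<and> (\<Sum>i<k. dL i * dR i) = n \<and> unitary_mat n V \<and>
     (\<lambda>Y. V * Y * adj V) ` commutant n \<B> =
       {blockdiag_tensor_id k dL dR A | A. \<forall>i<k. A i \<in> carrier_mat (dL i) (dL i)}"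

(* Tr_B(X) = (+)_i Tr_{C^(dR i)} (pi_i (V X V^dagger) pi_i), an operator on
   (+)_i C^(dL i) = C^m, m = sum_i dL i *)
definition alg_trace ::
  "nat \<Rightarrow> (nat \<Rightarrow> nat) \<Rightarrow> (nat \<Rightarrow> nat) \<Rightarrow> complex mat \<Rightarrow> complex mat \<Rightarrow> complex mat" where
  "alg_trace k dL dR V X =
     (let n = (\<Sum>i<k. dL i * dR i); m = (\<Sum>i<k. dL i); P = (\<lambda>i. dL i * dR i);
          Y = V * X * adj V in
      mat_sum m m (\<lambda>i. embed m (offs dL i) (dL i) *
          ptrace_right (dL i) (dR i)
            (adj (embed n (offs P i) (P i)) * Y * embed n (offs P i) (P i))
          * adj (embed m (offs dL i) (dL i))) k)"

end

theory Submission
  imports Defs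
begin


lemma adj_def': "adj A = mat (dim_col A) (dim_row A) (\<lambda>(i,j). cnj (A $$ (j,i)))"
  unfolding mat_adjoint_def mat_of_rows_def
  by (rule eq_matI) auto

lemma adj_carrier[simp]: "A \<in> carrier_mat m n \<Longrightarrow> adj A \<in> carrier_mat n m"
  by (simp add: adj_def')

lemma adj_dims[simp]: "dim_row (adj A) = dim_col A" "dim_col (adj A) = dim_row A"
  by (simp_all add: adj_def')

lemma adj_index[simp]: "i < dim_col A \<Longrightarrow> j < dim_row A \<Longrightarrow> adj A $$ (i,j) = cnj (A $$ (j,i))"
  by (simp add: adj_def')

lemma mult_index: "A \<in> carrier_mat m n \<Longrightarrow> B \<in> carrier_mat n p \<Longrightarrow> i < m \<Longrightarrow> j < p \<Longrightarrow>
   (A*B) $$ (i,j) = (\<Sum>l<n. A $$ (i,l) * B $$ (l,j))"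
  by (auto simp: scalar_prod_def lessThan_atLeast0 intro!: sum.cong)

lemma adj_adj[simp]: "adj (adj A) = A"
  by (rule eq_matI) auto

lemma adj_mult: assumes "A \<in> carrier_mat m n" "B \<in> carrier_mat n p" shows "adj (A*B) = adj B * adj A"
proof (rule eq_matI)
  fix i j assume "i < dim_row (adj B * adj A)" "j < dim_col (adj B * adj A)"
  then have ij: "i < p" "j < m" using assms by auto
  show "adj (A*B) $$ (i,j) = (adj B * adj A) $$ (i,j)"
  proof -
    have "adj (A*B) $$ (i,j) = cnj ((A*B) $$ (j,i))" using assms ij by (intro adj_index) auto
    also have "\<dots> = (\<Sum>l<n. cnj (A $$ (j,l)) * cnj (B $$ (l,i)))"
      using assms ij by (simp add: mult_index[of A m n B p] del: index_mult_mat)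
    also have "\<dots> = (adj B * adj A) $$ (i,j)"
      using assms ij by (simp add: mult_index[of "adj B" p n "adj A" m] mult.commute del: index_mult_mat)
    finally show ?thesis .
  qed
qed (use assms in auto)

lemma sum_mult_split: "(\<Sum>u<a*b. f u) = (\<Sum>p<a. \<Sum>q<b. f (p*b+q::nat))"
proof -
  have "(\<Sum>u<a*b. f u) = (\<Sum>p<a. sum f {p*b..<p*b+b})" by (rule sum.nat_group[symmetric])
  also have "\<dots> = (\<Sum>p<a. \<Sum>q<b. f (p*b+q))"
  proof (rule sum.cong[OF refl])
    fix p
    show "sum f {p*b..<p*b+b} = (\<Sum>q<b. f (p*b+q))"
      using sum.shift_bounds_nat_ivl[of f 0 "p*b" b]
      by (simp add: lessThan_atLeast0 add.commute)
  qed
  finally show ?thesis .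
qed

lemma divmod_lt: "p < a \<Longrightarrow> q < (b::nat) \<Longrightarrow> p*b+q < a*b"
proof -
  assume "p < a" "q < b"
  then have "p*b + q < p*b + b" by simp
  also have "\<dots> = (Suc p) * b" by simp
  also have "\<dots> \<le> a*b" using \<open>p<a\<close> by (intro mult_le_mono1) simp
  finally show ?thesis .
qed

lemma divmod_inj: "q < (b::nat) \<Longrightarrow> q' < b \<Longrightarrow> p*b+q = p'*b+q' \<longleftrightarrow> p = p' \<and> q = q'"
proof
  assume qb: "q < b" "q' < b" and e: "p*b+q = p'*b+q'"
  have "(p*b+q) div b = p" "(p*b+q) mod b = q" using qb by auto
  moreover have "(p'*b+q') div b = p'" "(p'*b+q') mod b = q'" using qb by auto
  ultimately show "p = p' \<and> q = q'" using e by metis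
qed auto

lemma if_times0[simp]: "(if P then x else (0::'a::mult_zero)) * y = (if P then x * y else 0)" by simp
lemma times_if0[simp]: "y * (if P then x else (0::'a::mult_zero)) = (if P then y * x else 0)" by simp
lemma sum_if_const[simp]: "(\<Sum>x\<in>S. if P then f x else 0) = (if P then (\<Sum>x\<in>S. f x) else 0)" by auto

lemma TR_dims[simp]: "dim_row (tensor_id_right a b B) = a*b" "dim_col (tensor_id_right a b B) = a*b"
  by (simp_all add: tensor_id_right_def)
lemma TL_dims[simp]: "dim_row (tensor_id_left a b B) = a*b" "dim_col (tensor_id_left a b B) = a*b"
  by (simp_all add: tensor_id_left_def)

lemma TR_carrier[simp]: "tensor_id_right a b B \<in> carrier_mat (a*b) (a*b)"
  by (simp add: tensor_id_right_def)
lemma TL_carrier[simp]: "tensor_id_left a b C \<in> carrier_mat (a*b) (a*b)"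
  by (simp add: tensor_id_left_def)

lemma TR_index: "p < a \<Longrightarrow> p' < a \<Longrightarrow> q < b \<Longrightarrow> q' < b \<Longrightarrow>
  tensor_id_right a b B $$ (p*b+q, p'*b+q') = (if q = q' then B $$ (p,p') else 0)"
  using divmod_lt[of p a q b] divmod_lt[of p' a q' b] by (simp add: tensor_id_right_def)

lemma TL_index: "p < a \<Longrightarrow> p' < a \<Longrightarrow> q < b \<Longrightarrow> q' < b \<Longrightarrow>
  tensor_id_left a b C $$ (p*b+q, p'*b+q') = (if p = p' then C $$ (q,q') else 0)"
  using divmod_lt[of p a q b] divmod_lt[of p' a q' b] by (simp add: tensor_id_left_def)

lemma TR_mult_left: assumes "Z \<in> carrier_mat (a*b) c" "p < a" "q < b" "v < c"
  shows "(tensor_id_right a b B * Z) $$ (p*b+q, v) = (\<Sum>p'<a. B $$ (p,p') * Z $$ (p'*b+q, v))"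
proof -
  have "(tensor_id_right a b B * Z) $$ (p*b+q, v) = (\<Sum>u<a*b. tensor_id_right a b B $$ (p*b+q,u) * Z $$ (u,v))"
    by (rule mult_index[of _ "a*b" "a*b" _ c]) (use assms divmod_lt[of p a q b] in auto)
  also have "\<dots> = (\<Sum>p'<a. \<Sum>q'<b. tensor_id_right a b B $$ (p*b+q,p'*b+q') * Z $$ (p'*b+q',v))"
    by (rule sum_mult_split)
  also have "\<dots> = (\<Sum>p'<a. B $$ (p,p') * Z $$ (p'*b+q, v))"
    using assms by (auto simp: TR_index intro!: sum.cong)
  finally show ?thesis .
qed

lemma TR_mult_right: assumes "Z \<in> carrier_mat c (a*b)" "p < a" "q < b" "u < c"
  shows "(Z * tensor_id_right a b B) $$ (u, p*b+q) = (\<Sum>p'<a. Z $$ (u, p'*b+q) * B $$ (p',p))"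
proof -
  have "(Z * tensor_id_right a b B) $$ (u, p*b+q) = (\<Sum>w<a*b. Z $$ (u,w) * tensor_id_right a b B $$ (w, p*b+q))"
    by (rule mult_index[of _ c "a*b" _ "a*b"]) (use assms divmod_lt[of p a q b] in auto)
  also have "\<dots> = (\<Sum>p'<a. \<Sum>q'<b. Z $$ (u, p'*b+q') * tensor_id_right a b B $$ (p'*b+q', p*b+q))"
    by (rule sum_mult_split)
  also have "\<dots> = (\<Sum>p'<a. Z $$ (u, p'*b+q) * B $$ (p',p))"
    using assms by (auto simp: TR_index intro!: sum.cong)
  finally show ?thesis .
qed

lemma TL_mult_left: assumes "Z \<in> carrier_mat (a*b) c" "p < a" "q < b" "v < c"
  shows "(tensor_id_left a b C * Z) $$ (p*b+q, v) = (\<Sum>q'<b. C $$ (q,q') * Z $$ (p*b+q', v))"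
proof -
  have "(tensor_id_left a b C * Z) $$ (p*b+q, v) = (\<Sum>u<a*b. tensor_id_left a b C $$ (p*b+q,u) * Z $$ (u,v))"
    by (rule mult_index[of _ "a*b" "a*b" _ c]) (use assms divmod_lt[of p a q b] in auto)
  also have "\<dots> = (\<Sum>p'<a. \<Sum>q'<b. tensor_id_left a b C $$ (p*b+q,p'*b+q') * Z $$ (p'*b+q',v))"
    by (rule sum_mult_split)
  also have "\<dots> = (\<Sum>q'<b. C $$ (q,q') * Z $$ (p*b+q', v))"
    using assms by (simp add: TL_index)
  finally show ?thesis .
qed

lemma TR_TL_comm: assumes "B \<in> carrier_mat a a" "C \<in> carrier_mat b b"
  shows "tensor_id_right a b B * tensor_id_left a b C = tensor_id_left a b C * tensor_id_right a b B"
proof (rule eq_matI)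
  fix i j assume "i < dim_row (tensor_id_left a b C * tensor_id_right a b B)"
     "j < dim_col (tensor_id_left a b C * tensor_id_right a b B)"
  then have ij: "i < a*b" "j < a*b" by auto
  then have b0: "0 < b" by (cases b) auto
  define p q p' q' where "p = i div b" "q = i mod b" "p' = j div b" "q' = j mod b"
  have i: "i = p*b+q" and j: "j = p'*b+q'" unfolding p_q_p'_q'_def by auto
  have lt: "p < a" "q < b" "p' < a" "q' < b" using ij b0 unfolding p_q_p'_q'_def
    by (auto simp: less_mult_imp_div_less)
  have "(tensor_id_right a b B * tensor_id_left a b C) $$ (p*b+q, p'*b+q') = B $$ (p,p') * C $$ (q,q')"
  proof -
    have "(tensor_id_right a b B * tensor_id_left a b C) $$ (p*b+q, p'*b+q') = (\<Sum>p''<a. B $$ (p,p'') * tensor_id_left a b C $$ (p''*b+q, p'*b+q'))"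
      by (rule TR_mult_left) (use lt divmod_lt in auto)
    also have "\<dots> = B $$ (p,p') * C $$ (q,q')" using lt by (simp add: TL_index)
    finally show ?thesis .
  qed
  moreover have "(tensor_id_left a b C * tensor_id_right a b B) $$ (p*b+q, p'*b+q') = B $$ (p,p') * C $$ (q,q')"
  proof -
    have "(tensor_id_left a b C * tensor_id_right a b B) $$ (p*b+q, p'*b+q') = (\<Sum>q''<b. C $$ (q,q'') * tensor_id_right a b B $$ (p*b+q'', p'*b+q'))"
      by (rule TL_mult_left) (use lt divmod_lt in auto)
    also have "\<dots> = B $$ (p,p') * C $$ (q,q')" using lt by (simp add: TR_index)
    finally show ?thesis .
  qed
  ultimately show "(tensor_id_right a b B * tensor_id_left a b C) $$ (i,j) = (tensor_id_left a b C * tensor_id_right a b B) $$ (i,j)"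
    using i j by simp
qed auto



declare index_mult_mat[simp del]

lemma sum_lessThan_add_split: "(\<Sum>g<m+l. f g) = (\<Sum>g<m. f g) + (\<Sum>c<l. f (m+c::nat))"
  by (induction l) (auto simp: add.assoc)

lemma offs_Suc: "offs d (Suc i) = offs d i + d i" by (simp add: offs_def)
lemma offs_0[simp]: "offs d 0 = 0" by (simp add: offs_def)

lemma offs_mono: "i < j \<Longrightarrow> offs d i + d i \<le> offs d j"
proof (induction j)
  case (Suc j)
  then show ?case by (cases "i < j") (auto simp: offs_Suc less_Suc_eq)
qed simp

lemma offs_inj: assumes "c < d i" "c' < d j" "offs d i + c = offs d j + c'" shows "i = j \<and> c = c'"
proof -
  have "\<not> i < j" using offs_mono[of i j d] assms by auto
  moreover have "\<not> j < i" using offs_mono[of j i d] assms by auto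
  ultimately have "i = j" by auto
  then show ?thesis using assms by auto
qed

lemma offs_surj: "g < offs d k \<Longrightarrow> \<exists>i<k. \<exists>c<d i. g = offs d i + c"
proof (induction k)
  case (Suc k)
  show ?case
  proof (cases "g < offs d k")
    case True
    then obtain i c where "i<k" "c<d i" "g = offs d i + c" using Suc.IH by blast
    then show ?thesis by (intro exI[of _ i]) auto
  next
    case False
    then have "g - offs d k < d k" "g = offs d k + (g - offs d k)" using Suc.prems by (auto simp: offs_Suc)
    then show ?thesis by blast
  qed
qed simp

lemma offs_sum: "(\<Sum>g<offs d k. f g) = (\<Sum>i<k. \<Sum>c<d i. f (offs d i + c))"
  by (induction k) (auto simp: offs_Suc sum_lessThan_add_split)

lemma offs_lt: "i < k \<Longrightarrow> c < d i \<Longrightarrow> offs d i + c < offs d k"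
  using offs_mono[of i k d] by auto

definition dblk :: "(nat \<Rightarrow> nat) \<Rightarrow> nat \<Rightarrow> nat \<Rightarrow> nat" where
  "dblk d k g = (SOME i. i<k \<and> (\<exists>c<d i. g = offs d i + c))"
definition doff :: "(nat \<Rightarrow> nat) \<Rightarrow> nat \<Rightarrow> nat \<Rightarrow> nat" where
  "doff d k g = g - offs d (dblk d k g)"

lemma decode: assumes "g < offs d k"
  shows "dblk d k g < k" "doff d k g < d (dblk d k g)" "g = offs d (dblk d k g) + doff d k g"
proof -
  have "\<exists>i. i<k \<and> (\<exists>c<d i. g = offs d i + c)" using offs_surj[OF assms] by blast
  then have h: "dblk d k g < k \<and> (\<exists>c<d (dblk d k g). g = offs d (dblk d k g) + c)"
    unfolding dblk_def by (rule someI_ex)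
  then show "dblk d k g < k" "doff d k g < d (dblk d k g)" "g = offs d (dblk d k g) + doff d k g"
    unfolding doff_def by auto
qed

lemma decode_enc: assumes "i < k" "c < d i"
  shows "dblk d k (offs d i + c) = i" "doff d k (offs d i + c) = c"
proof -
  have l: "offs d i + c < offs d k" using offs_lt assms by blast
  note D = decode[OF l]
  have "dblk d k (offs d i + c) = i \<and> doff d k (offs d i + c) = c"
  proof -
    have "offs d (dblk d k (offs d i + c)) + doff d k (offs d i + c) = offs d i + c" using D(3) by simp
    from offs_inj[OF D(2) assms(2) this] show ?thesis .
  qed
  then show "dblk d k (offs d i + c) = i" "doff d k (offs d i + c) = c" by auto
qed

lemma embed_carrier[simp]: "embed N off d \<in> carrier_mat N d" by (simp add: embed_def)
lemma embed_dims[simp]: "dim_row (embed N off d) = N" "dim_col (embed N off d) = d" by (simp_all add: embed_def)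
lemma embed_index: "r < N \<Longrightarrow> c < d \<Longrightarrow> embed N off d $$ (r,c) = (if r = off + c then 1 else 0)"
  by (simp add: embed_def)

lemma sum_ind0: "(\<Sum>c<(d::nat). if g = off + c then F c else 0) = (if off \<le> g \<and> g < off + d then F (g - off) else (0::'a::comm_monoid_add))"
proof (cases "off \<le> g \<and> g < off + d")
  case True
  have "(\<Sum>c<d. if g = off + c then F c else 0) = (\<Sum>c<d. if c = g - off then F c else 0)"
    by (rule sum.cong) (use True in auto)
  moreover have "g - off < d" using True by linarith
  ultimately show ?thesis using True by simp
next
  case False
  then show ?thesis by (auto intro!: sum.neutral)
qed

lemma cnj_if[simp]: "cnj (if P then x else y) = (if P then cnj x else cnj y)" by simp

lemma mat_sum_index: "r < N \<Longrightarrow> c < M \<Longrightarrow> mat_sum N M f k $$ (r,c) = (\<Sum>i<k. f i $$ (r,c))"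
  by (simp add: mat_sum_def)
lemma mat_sum_carrier[simp]: "mat_sum N M f k \<in> carrier_mat N M" by (simp add: mat_sum_def)
lemma mat_sum_dims[simp]: "dim_row (mat_sum N M f k) = N" "dim_col (mat_sum N M f k) = M" by (simp_all add: mat_sum_def)

lemma embed_conj: assumes "off + d \<le> N" "T \<in> carrier_mat d d" "g < N" "h < N"
  shows "(embed N off d * T * adj (embed N off d)) $$ (g,h) =
    (if off \<le> g \<and> g < off+d \<and> off \<le> h \<and> h < off+d then T $$ (g-off, h-off) else 0)"
proof -
  have "(embed N off d * T * adj (embed N off d)) $$ (g,h) =
      (\<Sum>c'<d. (embed N off d * T) $$ (g,c') * adj (embed N off d) $$ (c',h))"
    by (rule mult_index[of _ N d _ N]) (use assms mult_carrier_mat[OF embed_carrier assms(2)] in auto)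
  also have "\<dots> = (\<Sum>c'<d. if h = off + c' then (\<Sum>c<d. if g = off + c then T $$ (c,c') else 0) else 0)"
    using assms by (intro sum.cong refl) (auto simp add: mult_index[of _ N d _ d] embed_index simp del: index_mult_mat intro!: sum.cong)
  also have "\<dots> = (if off \<le> g \<and> g < off+d \<and> off \<le> h \<and> h < off+d then T $$ (g-off, h-off) else 0)"
    by (simp add: sum_ind0)
  finally show ?thesis .
qed

lemma adjE_mult: assumes "off + d \<le> N" "Y \<in> carrier_mat N M" "c < d" "h < M"
  shows "(adj (embed N off d) * Y) $$ (c,h) = Y $$ (off+c,h)"
proof -
  have "(adj (embed N off d) * Y) $$ (c,h) = (\<Sum>g<N. adj (embed N off d) $$ (c,g) * Y $$ (g,h))"
    by (rule mult_index[of _ d N _ M]) (use assms in auto)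
  also have "\<dots> = (\<Sum>g<N. if g = off + c then Y $$ (g,h) else 0)"
    by (rule sum.cong[OF refl]) (use assms in \<open>auto simp: embed_index\<close>)
  also have "\<dots> = Y $$ (off+c,h)" using assms by simp
  finally show ?thesis .
qed

lemma embed_compress: assumes "off + d \<le> N" "Y \<in> carrier_mat N N" "c < d" "c' < d"
  shows "(adj (embed N off d) * Y * embed N off d) $$ (c,c') = Y $$ (off+c, off+c')"
proof -
  have "(adj (embed N off d) * Y * embed N off d) $$ (c,c') =
      (\<Sum>h<N. (adj (embed N off d) * Y) $$ (c,h) * embed N off d $$ (h,c'))"
    by (rule mult_index[of _ d N _ d]) (use assms mult_carrier_mat[OF adj_carrier[OF embed_carrier] assms(2)] in auto)
  also have "\<dots> = (\<Sum>h<N. if h = off + c' then Y $$ (off+c,h) else 0)"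
    by (rule sum.cong[OF refl]) (use assms in \<open>auto simp: embed_index adjE_mult\<close>)
  also have "\<dots> = Y $$ (off+c, off+c')"
    using assms by simp
  finally show ?thesis .
qed



locale setting =
  fixes n a b k :: nat and \<chi> V :: "complex mat" and BB :: "complex mat set" and dL dR :: "nat \<Rightarrow> nat"
  assumes vn: "vn_algebra n BB" and sm: "splitting_map n a b \<chi>" and ln: "lean n a b \<chi>"
    and stR: "stloc_R n a b \<chi> = BB" and aw: "AW_decomposition n BB k dL dR V"
begin

abbreviation PP :: "nat \<Rightarrow> nat" where "PP \<equiv> (\<lambda>i. dL i * dR i)"

definition idx :: "nat \<Rightarrow> nat \<Rightarrow> nat \<Rightarrow> nat" where "idx i x r = offs PP i + (x * dR i + r)"
definition W :: "complex mat" where "W = \<chi> * adj V"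

lemma aw_sum: "(\<Sum>i<k. dL i * dR i) = n" and aw_pos: "\<forall>i<k. 0 < dL i \<and> 0 < dR i"
  and aw_unit: "unitary_mat n V"
  and aw_img: "(\<lambda>Y. V * Y * adj V) ` commutant n BB =
       {blockdiag_tensor_id k dL dR A | A. \<forall>i<k. A i \<in> carrier_mat (dL i) (dL i)}"
  using aw unfolding AW_decomposition_def by blast+

lemma n_eq: "n = offs PP k" using aw_sum unfolding offs_def by simp
lemma posL: "i<k \<Longrightarrow> 0 < dL i" using aw_pos by blast
lemma posR: "i<k \<Longrightarrow> 0 < dR i" using aw_pos by blast

lemma V_carrier: "V \<in> carrier_mat n n" and VV: "adj V * V = 1\<^sub>m n" and VV': "V * adj V = 1\<^sub>m n"
  using aw_unit unfolding unitary_mat_def isometry_def by blast+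

lemma chi_carrier: "\<chi> \<in> carrier_mat (a*b) n" and chichi: "adj \<chi> * \<chi> = 1\<^sub>m n"
  using sm by (auto simp: splitting_map_def isometry_def)

lemma W_carrier: "W \<in> carrier_mat (a*b) n"
  unfolding W_def by (rule mult_carrier_mat[OF chi_carrier adj_carrier[OF V_carrier]])

lemma adjW: "adj W = V * adj \<chi>"
  unfolding W_def adj_mult[OF chi_carrier adj_carrier[OF V_carrier]] by simp

lemma WV: "W * V = \<chi>"
proof -
  have "W * V = \<chi> * (adj V * V)" unfolding W_def
    by (rule assoc_mult_mat[OF chi_carrier adj_carrier[OF V_carrier] V_carrier])
  also have "\<dots> = \<chi>" unfolding VV by (rule right_mult_one_mat[OF chi_carrier])
  finally show ?thesis .
qed

lemma WW: "adj W * W = 1\<^sub>m n"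
proof -
  have c1: "adj \<chi> \<in> carrier_mat n (a*b)" using chi_carrier by simp
  have c2: "adj V \<in> carrier_mat n n" using V_carrier by simp
  have "adj W * W = V * adj \<chi> * (\<chi> * adj V)" unfolding adjW by (simp add: W_def)
  also have "\<dots> = V * (adj \<chi> * (\<chi> * adj V))"
    by (rule assoc_mult_mat[OF V_carrier c1 mult_carrier_mat[OF chi_carrier c2]])
  also have "adj \<chi> * (\<chi> * adj V) = adj \<chi> * \<chi> * adj V"
    by (rule assoc_mult_mat[OF c1 chi_carrier c2, symmetric])
  also have "\<dots> = adj V" unfolding chichi by (rule left_mult_one_mat[OF c2])
  finally show ?thesis using VV' by simp
qed

lemma idx_lt: "i<k \<Longrightarrow> x<dL i \<Longrightarrow> r<dR i \<Longrightarrow> idx i x r < n"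
  unfolding idx_def n_eq by (rule offs_lt) (auto intro: divmod_lt)

lemma idx_inj: assumes "i<k" "x<dL i" "r<dR i" "j<k" "y<dL j" "s<dR j"
  shows "idx i x r = idx j y s \<longleftrightarrow> (i=j \<and> x=y \<and> r=s)"
proof
  assume e: "idx i x r = idx j y s"
  have "i = j \<and> x*dR i + r = y*dR j + s"
    using offs_inj[of "x*dR i + r" PP i "y*dR j+s" j] e assms divmod_lt[of x "dL i" r "dR i"]
      divmod_lt[of y "dL j" s "dR j"] unfolding idx_def by auto
  then show "i=j \<and> x=y \<and> r=s" using divmod_inj[of r "dR i" s x y] assms by auto
qed auto

lemma sum_n: "(\<Sum>g<n. f g) = (\<Sum>i<k. \<Sum>x<dL i. \<Sum>r<dR i. f (idx i x r))"
  unfolding n_eq offs_sum idx_def by (simp add: sum_mult_split)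

lemma idx_surj: assumes "g < n" shows "\<exists>i x r. i<k \<and> x<dL i \<and> r<dR i \<and> g = idx i x r"
proof -
  obtain i c where ic: "i<k" "c < PP i" "g = offs PP i + c" using offs_surj[of g PP k] assms n_eq by auto
  have "dR i > 0" using posR ic by auto
  then have "c div dR i < dL i" "c mod dR i < dR i" "c = c div dR i * dR i + c mod dR i" using ic
    by (auto simp: less_mult_imp_div_less)
  then show ?thesis using ic unfolding idx_def by metis
qed

lemma mat_eq_idx: assumes "A \<in> carrier_mat n n" "B \<in> carrier_mat n n"
  "\<And>i x r j y s. i<k \<Longrightarrow> x<dL i \<Longrightarrow> r<dR i \<Longrightarrow> j<k \<Longrightarrow> y<dL j \<Longrightarrow> s<dR j \<Longrightarrow>
     A $$ (idx i x r, idx j y s) = B $$ (idx i x r, idx j y s)"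
  shows "A = B"
proof (rule eq_matI)
  fix g h assume "g < dim_row B" "h < dim_col B"
  then have "g < n" "h < n" using assms by auto
  then show "A $$ (g,h) = B $$ (g,h)" using idx_surj assms(3) by metis
qed (use assms in auto)

lemma BD_carrier[simp]: "blockdiag_tensor_id k dL dR A \<in> carrier_mat n n"
  using n_eq by (simp add: blockdiag_tensor_id_def Let_def offs_def)

lemma blk_cond: assumes "i<k" "c < PP i"
  shows "(offs PP i' \<le> offs PP i + c \<and> offs PP i + c < offs PP i' + PP i') \<longleftrightarrow> i' = i"
proof
  assume h: "offs PP i' \<le> offs PP i + c \<and> offs PP i + c < offs PP i' + PP i'"
  then have "offs PP i' + (offs PP i + c - offs PP i') = offs PP i + c" "offs PP i + c - offs PP i' < PP i'" by auto
  then show "i' = i" using offs_inj[of _ PP i' c i] assms by metis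
qed (use assms in auto)

lemma BD_index: assumes A: "\<And>i. i<k \<Longrightarrow> A i \<in> carrier_mat (dL i) (dL i)"
  and v: "i<k" "x<dL i" "r<dR i" "j<k" "y<dL j" "s<dR j"
  shows "blockdiag_tensor_id k dL dR A $$ (idx i x r, idx j y s) = (if i = j \<and> r = s then A i $$ (x,y) else 0)"
proof -
  have l1: "x*dR i + r < PP i" "y*dR j + s < PP j" using v divmod_lt by auto
  have "blockdiag_tensor_id k dL dR A $$ (idx i x r, idx j y s) =
     (\<Sum>i'<k. (embed n (offs PP i') (PP i') * tensor_id_right (dL i') (dR i') (A i') * adj (embed n (offs PP i') (PP i'))) $$ (idx i x r, idx j y s))"
    unfolding blockdiag_tensor_id_def Let_def using n_eq idx_lt v by (simp add: mat_sum_index offs_def)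
  also have "\<dots> = (\<Sum>i'<k. if i' = i \<and> i' = j then tensor_id_right (dL i') (dR i') (A i') $$ (x*dR i + r, y * dR j + s) else 0)"
  proof (rule sum.cong[OF refl])
    fix i' assume "i' \<in> {..<k}"
    then have le: "offs PP i' + PP i' \<le> n" using n_eq offs_mono[of i' k PP] by auto
    show "(embed n (offs PP i') (PP i') * tensor_id_right (dL i') (dR i') (A i') * adj (embed n (offs PP i') (PP i'))) $$ (idx i x r, idx j y s) =
      (if i' = i \<and> i' = j then tensor_id_right (dL i') (dR i') (A i') $$ (x*dR i + r, y * dR j + s) else 0)"
      apply (subst embed_conj[OF le])
      using v idx_lt blk_cond[OF v(1) l1(1), of i'] blk_cond[OF v(4) l1(2), of i'] unfolding idx_def by auto
  qed
  also have "\<dots> = (if i = j then tensor_id_right (dL i) (dR i) (A i) $$ (x*dR i + r, y * dR i + s) else 0)"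
    using v by (cases "i = j") (auto intro!: sum.neutral)
  also have "\<dots> = (if i = j \<and> r = s then A i $$ (x,y) else 0)"
    using v by (auto simp: TR_index)
  finally show ?thesis .
qed

end


declare index_mult_mat(2,3)[simp] assoc_mult_mat[simp del]

lemma assoc': assumes "dim_col A = dim_row B" "dim_col B = dim_row C" shows "A * B * C = A * (B * (C::'a::semiring_0 mat))"
proof -
  have 1: "A \<in> carrier_mat (dim_row A) (dim_col A)" by (rule carrier_matI) (rule refl)+
  have 2: "B \<in> carrier_mat (dim_col A) (dim_col B)" by (rule carrier_matI) (use assms in auto)
  have 3: "C \<in> carrier_mat (dim_col B) (dim_col C)" by (rule carrier_matI) (use assms in auto)
  show ?thesis by (rule assoc_mult_mat[OF 1 2 3])
qed

lemma carrier_dims: "A \<in> carrier_mat m n \<Longrightarrow> dim_row A = m \<and> dim_col A = n" by auto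

context setting begin

lemma chi_dims[simp]: "dim_row \<chi> = a*b" "dim_col \<chi> = n" using chi_carrier by auto
lemma V_dims[simp]: "dim_row V = n" "dim_col V = n" using V_carrier by auto
lemma W_dims[simp]: "dim_row W = a*b" "dim_col W = n" using W_carrier by auto

lemma BB_eq: "BB = commutant n (stloc_L n a b \<chi>)"
  using ln stR unfolding lean_def balanced_def by auto

lemma stL_sub: assumes "A \<in> stloc_L n a b \<chi>" shows "A \<in> commutant n BB"
proof -
  have "A \<in> carrier_mat n n" using assms by (simp add: stloc_L_def)
  moreover have "\<forall>S\<in>BB. A * S = S * A" using assms unfolding BB_eq commutant_def by auto
  ultimately show ?thesis by (simp add: commutant_def)
qed

lemma img_sub: "T \<in> commutant n BB \<Longrightarrow> \<exists>A. (\<forall>i<k. A i \<in> carrier_mat (dL i) (dL i)) \<and> V * T * adj V = blockdiag_tensor_id k dL dR A"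
  using aw_img by blast

lemma img_sup: "(\<forall>i<k. A i \<in> carrier_mat (dL i) (dL i)) \<Longrightarrow> \<exists>T\<in>commutant n BB. V * T * adj V = blockdiag_tensor_id k dL dR A"
proof -
  assume "\<forall>i<k. A i \<in> carrier_mat (dL i) (dL i)"
  then have "blockdiag_tensor_id k dL dR A \<in> (\<lambda>Y. V * Y * adj V) ` commutant n BB" unfolding aw_img by blast
  then show ?thesis by force
qed

lemma conj_comm: assumes T: "T \<in> carrier_mat n n" and Y: "Y \<in> carrier_mat n n"
  and h: "Y * (V * T * adj V) = (V * T * adj V) * Y"
  shows "(adj V * Y * V) * T = T * (adj V * Y * V)"
proof -
  have dT: "dim_row T = n" "dim_col T = n" and dY: "dim_row Y = n" "dim_col Y = n" using T Y by auto
  have "(adj V * Y * V) * T = adj V * Y * (V * T * (adj V * V))"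
    using dT dY by (simp add: assoc' VV)
  also have "\<dots> = adj V * (Y * (V * T * adj V)) * V"
    using dT dY by (simp add: assoc')
  also have "\<dots> = adj V * ((V * T * adj V) * Y) * V" using h by simp
  also have "\<dots> = (adj V * V) * T * (adj V * Y * V)"
    using dT dY by (simp add: assoc')
  also have "\<dots> = T * (adj V * Y * V)" using dT dY by (simp add: VV)
  finally show ?thesis .
qed

lemma left_in_D: assumes At: "At \<in> carrier_mat a a"
  shows "\<exists>A. (\<forall>i<k. A i \<in> carrier_mat (dL i) (dL i)) \<and> adj W * tensor_id_right a b At * W = blockdiag_tensor_id k dL dR A"
proof -
  define M where "M = adj \<chi> * tensor_id_right a b At * \<chi>"
  have Mc: "M \<in> carrier_mat n n" unfolding M_def by (rule carrier_matI) simp_all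
  have "M \<in> commutant n BB"
    unfolding commutant_def
  proof (intro CollectI conjI ballI Mc)
    fix S assume "S \<in> BB"
    then obtain C where C: "C \<in> carrier_mat b b" "S * adj \<chi> = adj \<chi> * tensor_id_left a b C"
      "\<chi> * S = tensor_id_left a b C * \<chi>" and Sc: "S \<in> carrier_mat n n"
      unfolding stR[symmetric] stloc_R_def by blast
    have dS: "dim_row S = n" "dim_col S = n" using Sc by auto
    have "M * S = adj \<chi> * (tensor_id_right a b At * (\<chi> * S))"
      unfolding M_def using dS by (simp add: assoc')
    also have "\<dots> = adj \<chi> * ((tensor_id_right a b At * tensor_id_left a b C) * \<chi>)"
      unfolding C(3) by (simp add: assoc')
    also have "\<dots> = adj \<chi> * ((tensor_id_left a b C * tensor_id_right a b At) * \<chi>)"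
      using TR_TL_comm[OF At C(1)] by simp
    also have "\<dots> = (adj \<chi> * tensor_id_left a b C) * (tensor_id_right a b At * \<chi>)"
      by (simp add: assoc')
    also have "\<dots> = S * M" unfolding C(2)[symmetric] M_def using dS by (simp add: assoc')
    finally show "M * S = S * M" .
  qed
  then obtain A where A: "\<forall>i<k. A i \<in> carrier_mat (dL i) (dL i)" "V * M * adj V = blockdiag_tensor_id k dL dR A"
    using img_sub by blast
  have "adj W * tensor_id_right a b At * W = V * M * adj V"
    unfolding adjW unfolding M_def W_def by (simp add: assoc')
  then show ?thesis using A by auto
qed

lemma right_comm_D: assumes C: "C \<in> carrier_mat b b" and A: "\<forall>i<k. A i \<in> carrier_mat (dL i) (dL i)"
  shows "(adj W * tensor_id_left a b C * W) * blockdiag_tensor_id k dL dR A = blockdiag_tensor_id k dL dR A * (adj W * tensor_id_left a b C * W)"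
proof -
  define M where "M = adj \<chi> * tensor_id_left a b C * \<chi>"
  have Mc: "M \<in> carrier_mat n n" unfolding M_def by (rule carrier_matI) simp_all
  have "M \<in> commutant n (stloc_L n a b \<chi>)"
    unfolding commutant_def
  proof (intro CollectI conjI ballI Mc)
    fix S assume "S \<in> stloc_L n a b \<chi>"
    then obtain At where At: "At \<in> carrier_mat a a" "S * adj \<chi> = adj \<chi> * tensor_id_right a b At"
      "\<chi> * S = tensor_id_right a b At * \<chi>" and Sc: "S \<in> carrier_mat n n"
      unfolding stloc_L_def by blast
    have dS: "dim_row S = n" "dim_col S = n" using Sc by auto
    have "M * S = adj \<chi> * (tensor_id_left a b C * (\<chi> * S))"
      unfolding M_def using dS by (simp add: assoc')
    also have "\<dots> = adj \<chi> * ((tensor_id_left a b C * tensor_id_right a b At) * \<chi>)"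
      unfolding At(3) by (simp add: assoc')
    also have "\<dots> = adj \<chi> * ((tensor_id_right a b At * tensor_id_left a b C) * \<chi>)"
      using TR_TL_comm[OF At(1) C] by simp
    also have "\<dots> = (adj \<chi> * tensor_id_right a b At) * (tensor_id_left a b C * \<chi>)"
      by (simp add: assoc')
    also have "\<dots> = S * M" unfolding At(2)[symmetric] M_def using dS by (simp add: assoc')
    finally show "M * S = S * M" .
  qed
  then have MB: "M \<in> BB" using BB_eq by simp
  obtain T where T: "T \<in> commutant n BB" "V * T * adj V = blockdiag_tensor_id k dL dR A"
    using img_sup[OF A] by blast
  have Tc: "T \<in> carrier_mat n n" using T(1) by (simp add: commutant_def)
  have TM: "T * M = M * T" using T(1) MB by (simp add: commutant_def)
  have dT: "dim_row T = n" "dim_col T = n" using Tc by auto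
  have dM: "dim_row M = n" "dim_col M = n" using Mc by auto
  have e: "adj W * tensor_id_left a b C * W = V * M * adj V"
    unfolding adjW unfolding M_def W_def by (simp add: assoc')
  have "(V * M * adj V) * (V * T * adj V) = V * M * (adj V * V) * T * adj V"
    using dT dM by (simp add: assoc')
  also have "\<dots> = V * (T * M) * adj V" using dT dM by (simp add: VV TM assoc')
  also have "\<dots> = V * T * (adj V * V) * M * adj V" using dT dM by (simp add: VV assoc')
  also have "\<dots> = (V * T * adj V) * (V * M * adj V)" using dT dM by (simp add: assoc')
  finally show ?thesis unfolding e T(2) .
qed

lemma Yconj_comm: assumes Y: "Y \<in> carrier_mat n n"
  and YD: "\<And>A. \<forall>i<k. A i \<in> carrier_mat (dL i) (dL i) \<Longrightarrow> Y * blockdiag_tensor_id k dL dR A = blockdiag_tensor_id k dL dR A * Y"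
  and S: "S \<in> stloc_L n a b \<chi>"
  shows "(adj V * Y * V) * S = S * (adj V * Y * V)"
proof -
  obtain A where A: "\<forall>i<k. A i \<in> carrier_mat (dL i) (dL i)" "V * S * adj V = blockdiag_tensor_id k dL dR A"
    using img_sub[OF stL_sub[OF S]] by blast
  have Sc: "S \<in> carrier_mat n n" using S by (simp add: stloc_L_def)
  show ?thesis by (rule conj_comm[OF Sc Y]) (use YD[OF A(1)] A(2) in simp)
qed

lemma right_from_D: assumes Y: "Y \<in> carrier_mat n n"
  and YD: "\<And>A. \<forall>i<k. A i \<in> carrier_mat (dL i) (dL i) \<Longrightarrow> Y * blockdiag_tensor_id k dL dR A = blockdiag_tensor_id k dL dR A * Y"
  shows "\<exists>C\<in>carrier_mat b b. W * Y = tensor_id_left a b C * W"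
proof -
  define Y' where "Y' = adj V * Y * V"
  have Y'c: "Y' \<in> carrier_mat n n" unfolding Y'_def using Y by (intro carrier_matI) auto
  have "Y' \<in> commutant n (stloc_L n a b \<chi>)"
    unfolding commutant_def
  proof (intro CollectI conjI ballI Y'c)
    fix S assume "S \<in> stloc_L n a b \<chi>"
    then show "Y' * S = S * Y'" unfolding Y'_def using Yconj_comm[OF Y YD] by blast
  qed
  then have "Y' \<in> stloc_R n a b \<chi>" using BB_eq stR by simp
  then obtain C where C: "C \<in> carrier_mat b b" "\<chi> * Y' = tensor_id_left a b C * \<chi>"
    unfolding stloc_R_def by blast
  have dY: "dim_row Y = n" "dim_col Y = n" using Y by auto
  have "W * Y = \<chi> * (adj V * Y * (V * adj V))" unfolding W_def using dY by (simp add: VV' assoc')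
  also have "\<dots> = (\<chi> * Y') * adj V" unfolding Y'_def using dY by (simp add: assoc')
  also have "\<dots> = tensor_id_left a b C * W" unfolding C(2) W_def by (simp add: assoc')
  finally show ?thesis using C(1) by blast
qed

lemma lean_comm: assumes Y: "Y \<in> carrier_mat n n"
  and YD: "\<And>A. \<forall>i<k. A i \<in> carrier_mat (dL i) (dL i) \<Longrightarrow> Y * blockdiag_tensor_id k dL dR A = blockdiag_tensor_id k dL dR A * Y"
  and At: "At \<in> cons_L a b \<chi>"
  shows "tensor_id_right a b At * (W * Y * adj W) = (W * Y * adj W) * tensor_id_right a b At"
proof -
  have Atc: "At \<in> carrier_mat a a" and cons: "(\<chi> * adj \<chi>) * tensor_id_right a b At = tensor_id_right a b At * (\<chi> * adj \<chi>)"
    using At by (auto simp: cons_L_def)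
  define S where "S = adj \<chi> * tensor_id_right a b At * \<chi>"
  have Sc: "S \<in> carrier_mat n n" unfolding S_def by (rule carrier_matI) simp_all
  have cS: "\<chi> * S = tensor_id_right a b At * \<chi>"
  proof -
    have "\<chi> * S = ((\<chi> * adj \<chi>) * tensor_id_right a b At) * \<chi>" unfolding S_def by (simp add: assoc')
    also have "\<dots> = tensor_id_right a b At * \<chi> * (adj \<chi> * \<chi>)" unfolding cons by (simp add: assoc')
    also have "\<dots> = tensor_id_right a b At * \<chi>" unfolding chichi by simp
    finally show ?thesis .
  qed
  have Sc': "S * adj \<chi> = adj \<chi> * tensor_id_right a b At"
  proof -
    have "S * adj \<chi> = adj \<chi> * ((tensor_id_right a b At) * (\<chi> * adj \<chi>))" unfolding S_def by (simp add: assoc')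
    also have "\<dots> = (adj \<chi> * \<chi>) * adj \<chi> * tensor_id_right a b At" unfolding cons[symmetric] by (simp add: assoc')
    also have "\<dots> = adj \<chi> * tensor_id_right a b At" unfolding chichi by simp
    finally show ?thesis .
  qed
  have SL: "S \<in> stloc_L n a b \<chi>" unfolding stloc_L_def using Sc Atc cS Sc' by blast
  define Y' where "Y' = adj V * Y * V"
  have com: "Y' * S = S * Y'" unfolding Y'_def by (rule Yconj_comm[OF Y YD SL])
  have dY: "dim_row Y = n" "dim_col Y = n" using Y by auto
  have dS: "dim_row S = n" "dim_col S = n" using Sc by auto
  have dY': "dim_row Y' = n" "dim_col Y' = n" unfolding Y'_def using dY by auto
  have Z: "W * Y * adj W = \<chi> * Y' * adj \<chi>" unfolding adjW unfolding W_def Y'_def using dY by (simp add: assoc')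
  have "tensor_id_right a b At * (\<chi> * Y' * adj \<chi>) = (tensor_id_right a b At * \<chi>) * Y' * adj \<chi>"
    using dY' by (simp add: assoc')
  also have "\<dots> = (\<chi> * S) * Y' * adj \<chi>" unfolding cS ..
  also have "\<dots> = \<chi> * (S * Y') * adj \<chi>" using dY' dS by (simp add: assoc')
  also have "\<dots> = \<chi> * (Y' * S) * adj \<chi>" unfolding com ..
  also have "\<dots> = \<chi> * Y' * (S * adj \<chi>)" using dY' dS by (simp add: assoc')
  also have "\<dots> = \<chi> * Y' * (adj \<chi> * tensor_id_right a b At)" unfolding Sc' ..
  also have "\<dots> = (\<chi> * Y' * adj \<chi>) * tensor_id_right a b At" using dY' dS by (simp add: assoc')
  finally show ?thesis unfolding Z .
qed

end


context setting begin

lemma BD_dims[simp]: "dim_row (blockdiag_tensor_id k dL dR A) = n" "dim_col (blockdiag_tensor_id k dL dR A) = n"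
  using BD_carrier[of A, THEN carrier_matD(1)] BD_carrier[of A, THEN carrier_matD(2)] by auto

lemma sum3_delta: assumes "j0<k" "y0 < dL j0" "t0 < dR j0"
  shows "(\<Sum>j<k. \<Sum>y<dL j. \<Sum>t<dR j. if j = j0 \<and> y = y0 \<and> t = t0 then F j y t else 0) = F j0 y0 t0"
proof -
  have "(\<Sum>j<k. \<Sum>y<dL j. \<Sum>t<dR j. if j = j0 \<and> y = y0 \<and> t = t0 then F j y t else 0) =
        (\<Sum>j<k. \<Sum>y<dL j. if j = j0 \<and> y = y0 then F j y t0 else 0)"
  proof (intro sum.cong refl)
    fix j y assume "j \<in> {..<k}" "y \<in> {..<dL j}"
    show "(\<Sum>t<dR j. if j = j0 \<and> y = y0 \<and> t = t0 then F j y t else 0) = (if j = j0 \<and> y = y0 then F j y t0 else 0)"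
      using assms by (cases "j = j0 \<and> y = y0") auto
  qed
  also have "\<dots> = (\<Sum>j<k. if j = j0 then F j y0 t0 else 0)"
  proof (intro sum.cong refl)
    fix j assume "j \<in> {..<k}"
    show "(\<Sum>y<dL j. if j = j0 \<and> y = y0 then F j y t0 else 0) = (if j = j0 then F j y0 t0 else 0)"
      using assms by (cases "j = j0") auto
  qed
  also have "\<dots> = F j0 y0 t0" using assms by simp
  finally show ?thesis .
qed

lemma sum3_delta2: assumes "j0<k" "t0 < dR j0"
  shows "(\<Sum>j<k. \<Sum>y<dL j. \<Sum>t<dR j. if j = j0 \<and> t = t0 then F j y t else 0) = (\<Sum>y<dL j0. F j0 y t0)"
proof -
  have "(\<Sum>j<k. \<Sum>y<dL j. \<Sum>t<dR j. if j = j0 \<and> t = t0 then F j y t else 0) =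
        (\<Sum>j<k. if j = j0 then (\<Sum>y<dL j. F j y t0) else 0)"
  proof (intro sum.cong refl)
    fix j assume "j \<in> {..<k}"
    show "(\<Sum>y<dL j. \<Sum>t<dR j. if j = j0 \<and> t = t0 then F j y t else 0) = (if j = j0 then (\<Sum>y<dL j. F j y t0) else 0)"
      using assms by (cases "j = j0") auto
  qed
  also have "\<dots> = (\<Sum>y<dL j0. F j0 y t0)" using assms by simp
  finally show ?thesis .
qed

definition bI :: "nat \<Rightarrow> nat" where "bI g = dblk PP k g"
definition bX :: "nat \<Rightarrow> nat" where "bX g = doff PP k g div dR (bI g)"
definition bR :: "nat \<Rightarrow> nat" where "bR g = doff PP k g mod dR (bI g)"

lemma dec_idx: assumes "i<k" "x<dL i" "r<dR i"
  shows "bI (idx i x r) = i" "bX (idx i x r) = x" "bR (idx i x r) = r"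
proof -
  have c: "x * dR i + r < PP i" using assms divmod_lt by auto
  note d = decode_enc[where d=PP and i=i and k=k and c="x*dR i+r", OF assms(1) c]
  show "bI (idx i x r) = i" unfolding bI_def idx_def using d by simp
  show "bX (idx i x r) = x" unfolding bX_def bI_def idx_def using d assms by simp
  show "bR (idx i x r) = r" unfolding bR_def bI_def idx_def using d assms by simp
qed

definition Ymat :: "nat \<Rightarrow> nat \<Rightarrow> nat \<Rightarrow> complex mat" where
  "Ymat i r s = mat n n (\<lambda>(g,h). if bI g = i \<and> bI h = i \<and> bX g = bX h \<and> bR g = r \<and> bR h = s then 1 else 0)"

lemma Ymat_carrier[simp]: "Ymat i r s \<in> carrier_mat n n" by (simp add: Ymat_def)
lemma Ymat_dims[simp]: "dim_row (Ymat i r s) = n" "dim_col (Ymat i r s) = n" by (simp_all add: Ymat_def)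

lemma Y_index: assumes "i1<k" "x1<dL i1" "r1<dR i1" "i2<k" "x2<dL i2" "r2<dR i2"
  shows "Ymat i r s $$ (idx i1 x1 r1, idx i2 x2 r2) = (if i1 = i \<and> i2 = i \<and> x1 = x2 \<and> r1 = r \<and> r2 = s then 1 else 0)"
  using assms idx_lt dec_idx by (simp add: Ymat_def)

lemma YL: assumes M: "M \<in> carrier_mat n N" and v: "i1<k" "x1<dL i1" "r1<dR i1" "h < N"
  and i: "i<k" "s < dR i"
  shows "(Ymat i r s * M) $$ (idx i1 x1 r1, h) = (if i1 = i \<and> r1 = r then M $$ (idx i x1 s, h) else 0)"
proof -
  have "(Ymat i r s * M) $$ (idx i1 x1 r1, h) = (\<Sum>g<n. Ymat i r s $$ (idx i1 x1 r1, g) * M $$ (g, h))"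
    by (rule mult_index[OF Ymat_carrier M]) (use v idx_lt in auto)
  also have "\<dots> = (\<Sum>j<k. \<Sum>y<dL j. \<Sum>t<dR j. Ymat i r s $$ (idx i1 x1 r1, idx j y t) * M $$ (idx j y t, h))"
    by (rule sum_n)
  also have "\<dots> = (\<Sum>j<k. \<Sum>y<dL j. \<Sum>t<dR j. if i1 = i \<and> r1 = r then (if j = i \<and> y = x1 \<and> t = s then M $$ (idx j y t, h) else 0) else 0)"
    by (intro sum.cong refl) (use v in \<open>auto simp: Y_index\<close>)
  also have "\<dots> = (if i1 = i \<and> r1 = r then M $$ (idx i x1 s, h) else 0)"
    using v i by (cases "i1 = i \<and> r1 = r") (auto simp: sum3_delta)
  finally show ?thesis .
qed

lemma YR: assumes M: "M \<in> carrier_mat N n" and v: "i2<k" "x2<dL i2" "r2<dR i2" "g < N"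
  and i: "i<k" "r < dR i"
  shows "(M * Ymat i r s) $$ (g, idx i2 x2 r2) = (if i2 = i \<and> r2 = s then M $$ (g, idx i x2 r) else 0)"
proof -
  have "(M * Ymat i r s) $$ (g, idx i2 x2 r2) = (\<Sum>h<n. M $$ (g, h) * Ymat i r s $$ (h, idx i2 x2 r2))"
    by (rule mult_index[OF M Ymat_carrier]) (use v idx_lt in auto)
  also have "\<dots> = (\<Sum>j<k. \<Sum>y<dL j. \<Sum>t<dR j. M $$ (g, idx j y t) * Ymat i r s $$ (idx j y t, idx i2 x2 r2))"
    by (rule sum_n)
  also have "\<dots> = (\<Sum>j<k. \<Sum>y<dL j. \<Sum>t<dR j. if i2 = i \<and> r2 = s then (if j = i \<and> y = x2 \<and> t = r then M $$ (g, idx j y t) else 0) else 0)"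
    by (intro sum.cong refl) (use v in \<open>auto simp: Y_index\<close>)
  also have "\<dots> = (if i2 = i \<and> r2 = s then M $$ (g, idx i x2 r) else 0)"
    using v i by (cases "i2 = i \<and> r2 = s") (auto simp: sum3_delta)
  finally show ?thesis .
qed

lemma Y_comm: assumes i: "i<k" "r<dR i" "s<dR i" and A: "\<forall>i<k. A i \<in> carrier_mat (dL i) (dL i)"
  shows "Ymat i r s * blockdiag_tensor_id k dL dR A = blockdiag_tensor_id k dL dR A * Ymat i r s"
proof (rule mat_eq_idx)
  fix i1 x1 r1 i2 x2 r2 assume v: "i1<k" "x1<dL i1" "r1<dR i1" "i2<k" "x2<dL i2" "r2<dR i2"
  have "(Ymat i r s * blockdiag_tensor_id k dL dR A) $$ (idx i1 x1 r1, idx i2 x2 r2) =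
    (if i1 = i \<and> r1 = r then blockdiag_tensor_id k dL dR A $$ (idx i x1 s, idx i2 x2 r2) else 0)"
    by (rule YL[where N=n]) (use v i idx_lt in auto)
  also have "\<dots> = (if i1 = i \<and> r1 = r \<and> i2 = i \<and> r2 = s then A i $$ (x1,x2) else 0)"
    using v i A by (auto simp: BD_index)
  also have "\<dots> = (if i2 = i \<and> r2 = s then blockdiag_tensor_id k dL dR A $$ (idx i1 x1 r1, idx i x2 r) else 0)"
    using v i A by (auto simp: BD_index)
  also have "\<dots> = (blockdiag_tensor_id k dL dR A * Ymat i r s) $$ (idx i1 x1 r1, idx i2 x2 r2)"
    by (rule YR[where N=n, symmetric]) (use v i idx_lt in auto)
  finally show "(Ymat i r s * blockdiag_tensor_id k dL dR A) $$ (idx i1 x1 r1, idx i2 x2 r2) =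
    (blockdiag_tensor_id k dL dR A * Ymat i r s) $$ (idx i1 x1 r1, idx i2 x2 r2)" .
qed (auto intro!: carrier_matI)

end


context setting begin

definition EU :: "nat \<Rightarrow> nat \<Rightarrow> nat \<Rightarrow> nat \<Rightarrow> complex mat" where
  "EU ia xa ya = (\<lambda>i. if i = ia then mat (dL i) (dL i) (\<lambda>(u,v). if u = xa \<and> v = ya then 1 else 0) else 0\<^sub>m (dL i) (dL i))"

lemma EU_carrier: "\<forall>i<k. EU ia xa ya i \<in> carrier_mat (dL i) (dL i)"
  by (simp add: EU_def)

lemma BD_EU: assumes v: "i<k" "x<dL i" "r<dR i" "j<k" "y<dL j" "s<dR j"
  shows "blockdiag_tensor_id k dL dR (EU ia xa ya) $$ (idx i x r, idx j y s) =
    (if i = j \<and> r = s \<and> i = ia \<and> x = xa \<and> y = ya then 1 else 0)"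
proof -
  have "blockdiag_tensor_id k dL dR (EU ia xa ya) $$ (idx i x r, idx j y s) = (if i = j \<and> r = s then EU ia xa ya i $$ (x,y) else 0)"
    by (rule BD_index[OF EU_carrier[rule_format] v])
  also have "\<dots> = (if i = j \<and> r = s \<and> i = ia \<and> x = xa \<and> y = ya then 1 else 0)"
    using v by (auto simp: EU_def)
  finally show ?thesis .
qed

lemma EL: assumes M: "M \<in> carrier_mat n N" and v: "i<k" "x<dL i" "r<dR i" "h < N" and ya: "ya < dL ia"
  shows "(blockdiag_tensor_id k dL dR (EU ia xa ya) * M) $$ (idx i x r, h) = (if i = ia \<and> x = xa then M $$ (idx ia ya r, h) else 0)"
proof -
  have "(blockdiag_tensor_id k dL dR (EU ia xa ya) * M) $$ (idx i x r, h) = (\<Sum>g<n. blockdiag_tensor_id k dL dR (EU ia xa ya) $$ (idx i x r, g) * M $$ (g, h))"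
    by (rule mult_index[OF BD_carrier M]) (use v idx_lt in auto)
  also have "\<dots> = (\<Sum>j<k. \<Sum>y<dL j. \<Sum>t<dR j. blockdiag_tensor_id k dL dR (EU ia xa ya) $$ (idx i x r, idx j y t) * M $$ (idx j y t, h))"
    by (rule sum_n)
  also have "\<dots> = (\<Sum>j<k. \<Sum>y<dL j. \<Sum>t<dR j. if i = ia \<and> x = xa then (if j = i \<and> y = ya \<and> t = r then M $$ (idx j y t, h) else 0) else 0)"
    by (intro sum.cong refl) (use v in \<open>auto simp: BD_EU\<close>)
  also have "\<dots> = (if i = ia \<and> x = xa then M $$ (idx ia ya r, h) else 0)"
    using v ya by (cases "i = ia \<and> x = xa") (auto simp: sum3_delta)
  finally show ?thesis .
qed

lemma ER: assumes M: "M \<in> carrier_mat N n" and v: "j<k" "y<dL j" "s<dR j" "g < N" and xa: "xa < dL ia"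
  shows "(M * blockdiag_tensor_id k dL dR (EU ia xa ya)) $$ (g, idx j y s) = (if j = ia \<and> y = ya then M $$ (g, idx ia xa s) else 0)"
proof -
  have "(M * blockdiag_tensor_id k dL dR (EU ia xa ya)) $$ (g, idx j y s) = (\<Sum>h<n. M $$ (g, h) * blockdiag_tensor_id k dL dR (EU ia xa ya) $$ (h, idx j y s))"
    by (rule mult_index[OF M BD_carrier]) (use v idx_lt in auto)
  also have "\<dots> = (\<Sum>i<k. \<Sum>x<dL i. \<Sum>t<dR i. M $$ (g, idx i x t) * blockdiag_tensor_id k dL dR (EU ia xa ya) $$ (idx i x t, idx j y s))"
    by (rule sum_n)
  also have "\<dots> = (\<Sum>i<k. \<Sum>x<dL i. \<Sum>t<dR i. if j = ia \<and> y = ya then (if i = j \<and> x = xa \<and> t = s then M $$ (g, idx i x t) else 0) else 0)"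
    by (intro sum.cong refl) (use v in \<open>auto simp: BD_EU\<close>)
  also have "\<dots> = (if j = ia \<and> y = ya then M $$ (g, idx ia xa s) else 0)"
    using v xa by (cases "j = ia \<and> y = ya") (auto simp: sum3_delta)
  finally show ?thesis .
qed

lemma commBD_eq: assumes T: "T \<in> carrier_mat n n"
  and TD: "\<And>A. \<forall>i<k. A i \<in> carrier_mat (dL i) (dL i) \<Longrightarrow> T * blockdiag_tensor_id k dL dR A = blockdiag_tensor_id k dL dR A * T"
  and v: "i<k" "x<dL i" "r<dR i" "j<k" "y<dL j" "s<dR j" and xa: "xa < dL ia" and ya: "ya < dL ia"
  shows "(if j = ia \<and> y = ya then T $$ (idx i x r, idx ia xa s) else 0) = (if i = ia \<and> x = xa then T $$ (idx ia ya r, idx j y s) else 0)"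
proof -
  have "(T * blockdiag_tensor_id k dL dR (EU ia xa ya)) $$ (idx i x r, idx j y s) = (if j = ia \<and> y = ya then T $$ (idx i x r, idx ia xa s) else 0)"
    by (rule ER[OF T]) (use v xa idx_lt in auto)
  moreover have "(blockdiag_tensor_id k dL dR (EU ia xa ya) * T) $$ (idx i x r, idx j y s) = (if i = ia \<and> x = xa then T $$ (idx ia ya r, idx j y s) else 0)"
    by (rule EL[OF T]) (use v ya idx_lt in auto)
  ultimately show ?thesis using TD[OF EU_carrier] by simp
qed

lemma commBD_off: assumes T: "T \<in> carrier_mat n n"
  and TD: "\<And>A. \<forall>i<k. A i \<in> carrier_mat (dL i) (dL i) \<Longrightarrow> T * blockdiag_tensor_id k dL dR A = blockdiag_tensor_id k dL dR A * T"
  and v: "i<k" "x<dL i" "r<dR i" "j<k" "y<dL j" "s<dR j" and ne: "\<not> (i = j \<and> x = y)"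
  shows "T $$ (idx i x r, idx j y s) = 0"
  using commBD_eq[OF T TD v, where ia=i and xa=x and ya=x] v ne by auto

lemma commBD_diag: assumes T: "T \<in> carrier_mat n n"
  and TD: "\<And>A. \<forall>i<k. A i \<in> carrier_mat (dL i) (dL i) \<Longrightarrow> T * blockdiag_tensor_id k dL dR A = blockdiag_tensor_id k dL dR A * T"
  and v: "i<k" "x<dL i" "r<dR i" "s<dR i"
  shows "T $$ (idx i x r, idx i x s) = T $$ (idx i 0 r, idx i 0 s)"
proof -
  have p: "0 < dL i" using posL v by auto
  show ?thesis using commBD_eq[OF T TD v(1-3) v(1) p v(4) v(2) p] by simp
qed

end


context setting begin

definition psi :: "nat \<Rightarrow> nat \<Rightarrow> nat \<Rightarrow> nat \<Rightarrow> nat \<Rightarrow> complex" where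
  "psi i x r p q = W $$ (p*b+q, idx i x r)"

definition eb :: "nat \<Rightarrow> nat \<Rightarrow> complex mat" where "eb q0 q1 = mat b b (\<lambda>(u,v). if u = q0 \<and> v = q1 then 1 else 0)"
definition ea :: "nat \<Rightarrow> nat \<Rightarrow> complex mat" where "ea p0 p1 = mat a a (\<lambda>(u,v). if u = p0 \<and> v = p1 then 1 else 0)"

lemma eb_carrier: "eb q0 q1 \<in> carrier_mat b b" by (simp add: eb_def)
lemma ea_carrier: "ea p0 p1 \<in> carrier_mat a a" by (simp add: ea_def)

lemma adjW_mult: assumes M: "M \<in> carrier_mat (a*b) N" and fg: "f < n" "g < N"
  shows "(adj W * M) $$ (f,g) = (\<Sum>p<a. \<Sum>q<b. cnj (W $$ (p*b+q, f)) * M $$ (p*b+q, g))"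
proof -
  have "(adj W * M) $$ (f,g) = (\<Sum>u<a*b. adj W $$ (f,u) * M $$ (u, g))"
    by (rule mult_index[OF adj_carrier[OF W_carrier] M fg])
  also have "\<dots> = (\<Sum>u<a*b. cnj (W $$ (u, f)) * M $$ (u, g))"
    by (intro sum.cong refl) (use fg in auto)
  also have "\<dots> = (\<Sum>p<a. \<Sum>q<b. cnj (W $$ (p*b+q, f)) * M $$ (p*b+q, g))"
    by (rule sum_mult_split)
  finally show ?thesis .
qed

lemma orth: assumes v: "i<k" "x<dL i" "r<dR i" "j<k" "y<dL j" "s<dR j"
  shows "(\<Sum>p<a. \<Sum>q<b. cnj (psi i x r p q) * psi j y s p q) = (if i = j \<and> x = y \<and> r = s then 1 else 0)"
proof -
  have "(adj W * W) $$ (idx i x r, idx j y s) = (\<Sum>p<a. \<Sum>q<b. cnj (psi i x r p q) * psi j y s p q)"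
    unfolding psi_def by (rule adjW_mult[OF W_carrier]) (use v idx_lt in auto)
  moreover have "(adj W * W) $$ (idx i x r, idx j y s) = (if i = j \<and> x = y \<and> r = s then 1 else 0)"
    unfolding WW using v idx_lt idx_inj by auto
  ultimately show ?thesis by simp
qed

lemma TLe_W: assumes "p<a" "q<b" "g<n" "q1<b"
  shows "(tensor_id_left a b (eb q0 q1) * W) $$ (p*b+q, g) = (if q = q0 then W $$ (p*b+q1, g) else 0)"
proof -
  have "(tensor_id_left a b (eb q0 q1) * W) $$ (p*b+q, g) = (\<Sum>q'<b. eb q0 q1 $$ (q,q') * W $$ (p*b+q', g))"
    by (rule TL_mult_left[OF W_carrier]) (use assms in auto)
  also have "\<dots> = (\<Sum>q'<b. if q' = q1 then (if q = q0 then W $$ (p*b+q', g) else 0) else 0)"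
    by (intro sum.cong refl) (use assms in \<open>auto simp: eb_def\<close>)
  also have "\<dots> = (if q = q0 then W $$ (p*b+q1, g) else 0)" using assms by simp
  finally show ?thesis .
qed

lemma TRe_W: assumes "p<a" "q<b" "g<n" "p1<a"
  shows "(tensor_id_right a b (ea p0 p1) * W) $$ (p*b+q, g) = (if p = p0 then W $$ (p1*b+q, g) else 0)"
proof -
  have "(tensor_id_right a b (ea p0 p1) * W) $$ (p*b+q, g) = (\<Sum>p'<a. ea p0 p1 $$ (p,p') * W $$ (p'*b+q, g))"
    by (rule TR_mult_left[OF W_carrier]) (use assms in auto)
  also have "\<dots> = (\<Sum>p'<a. if p' = p1 then (if p = p0 then W $$ (p'*b+q, g) else 0) else 0)"
    by (intro sum.cong refl) (use assms in \<open>auto simp: ea_def\<close>)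
  also have "\<dots> = (if p = p0 then W $$ (p1*b+q, g) else 0)" using assms by simp
  finally show ?thesis .
qed

lemma GRval: assumes "f<n" "g<n" "q0<b" "q1<b"
  shows "(adj W * tensor_id_left a b (eb q0 q1) * W) $$ (f,g) = (\<Sum>p<a. cnj (W $$ (p*b+q0, f)) * W $$ (p*b+q1, g))"
proof -
  have "adj W * tensor_id_left a b (eb q0 q1) * W = adj W * (tensor_id_left a b (eb q0 q1) * W)"
    by (simp add: assoc')
  then have "(adj W * tensor_id_left a b (eb q0 q1) * W) $$ (f,g) =
     (\<Sum>p<a. \<Sum>q<b. cnj (W $$ (p*b+q, f)) * (tensor_id_left a b (eb q0 q1) * W) $$ (p*b+q, g))"
    using adjW_mult[of "tensor_id_left a b (eb q0 q1) * W" n f g] assms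
    by (simp add: mult_carrier_mat[OF TL_carrier W_carrier])
  also have "\<dots> = (\<Sum>p<a. \<Sum>q<b. if q = q0 then cnj (W $$ (p*b+q, f)) * W $$ (p*b+q1, g) else 0)"
    by (intro sum.cong refl) (use assms in \<open>auto simp: TLe_W\<close>)
  also have "\<dots> = (\<Sum>p<a. cnj (W $$ (p*b+q0, f)) * W $$ (p*b+q1, g))"
    using assms by simp
  finally show ?thesis .
qed

lemma GLval: assumes "f<n" "g<n" "p0<a" "p1<a"
  shows "(adj W * tensor_id_right a b (ea p0 p1) * W) $$ (f,g) = (\<Sum>q<b. cnj (W $$ (p0*b+q, f)) * W $$ (p1*b+q, g))"
proof -
  have "adj W * tensor_id_right a b (ea p0 p1) * W = adj W * (tensor_id_right a b (ea p0 p1) * W)"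
    by (simp add: assoc')
  then have "(adj W * tensor_id_right a b (ea p0 p1) * W) $$ (f,g) =
     (\<Sum>p<a. \<Sum>q<b. cnj (W $$ (p*b+q, f)) * (tensor_id_right a b (ea p0 p1) * W) $$ (p*b+q, g))"
    using adjW_mult[of "tensor_id_right a b (ea p0 p1) * W" n f g] assms
    by (simp add: mult_carrier_mat[OF TR_carrier W_carrier])
  also have "\<dots> = (\<Sum>p<a. if p = p0 then (\<Sum>q<b. cnj (W $$ (p*b+q, f)) * W $$ (p1*b+q, g)) else 0)"
    by (intro sum.cong refl) (use assms in \<open>auto simp: TRe_W\<close>)
  also have "\<dots> = (\<Sum>q<b. cnj (W $$ (p0*b+q, f)) * W $$ (p1*b+q, g))"
    using assms by simp
  finally show ?thesis .
qed

lemma TRcarrier: "adj W * tensor_id_left a b (eb q0 q1) * W \<in> carrier_mat n n"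
  by (rule carrier_matI) simp_all

lemma GR_off: assumes v: "i<k" "x<dL i" "r<dR i" "j<k" "y<dL j" "s<dR j" and ne: "\<not> (i = j \<and> x = y)"
  and q: "q0<b" "q1<b"
  shows "(\<Sum>p<a. cnj (psi i x r p q0) * psi j y s p q1) = 0"
proof -
  have "(adj W * tensor_id_left a b (eb q0 q1) * W) $$ (idx i x r, idx j y s) = 0"
    by (rule commBD_off[OF TRcarrier _ v ne]) (rule right_comm_D[OF eb_carrier])
  then show ?thesis unfolding psi_def using GRval[of "idx i x r" "idx j y s" q0 q1] v q idx_lt by simp
qed

lemma GR_diag: assumes v: "i<k" "x<dL i" "r<dR i" "s<dR i" and q: "q0<b" "q1<b"
  shows "(\<Sum>p<a. cnj (psi i x r p q0) * psi i x s p q1) = (\<Sum>p<a. cnj (psi i 0 r p q0) * psi i 0 s p q1)"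
proof -
  have p: "0 < dL i" using posL v by auto
  have "(adj W * tensor_id_left a b (eb q0 q1) * W) $$ (idx i x r, idx i x s) =
        (adj W * tensor_id_left a b (eb q0 q1) * W) $$ (idx i 0 r, idx i 0 s)"
    by (rule commBD_diag[OF TRcarrier _ v]) (rule right_comm_D[OF eb_carrier])
  then show ?thesis unfolding psi_def using GRval v q idx_lt p by simp
qed

lemma GL_off: assumes v: "i<k" "x<dL i" "r<dR i" "j<k" "y<dL j" "s<dR j" and ne: "i \<noteq> j"
  and p: "p0<a" "p1<a"
  shows "(\<Sum>q<b. cnj (psi i x r p0 q) * psi j y s p1 q) = 0"
proof -
  obtain A where A: "\<forall>i<k. A i \<in> carrier_mat (dL i) (dL i)" "adj W * tensor_id_right a b (ea p0 p1) * W = blockdiag_tensor_id k dL dR A"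
    using left_in_D[OF ea_carrier] by blast
  have "(adj W * tensor_id_right a b (ea p0 p1) * W) $$ (idx i x r, idx j y s) = 0"
    unfolding A(2) using BD_index[of A, OF _ v] A(1) ne by auto
  then show ?thesis unfolding psi_def using GLval[of "idx i x r" "idx j y s" p0 p1] v p idx_lt by simp
qed

end


lemma cnj_mult_self: "cnj z * z = complex_of_real ((norm z)\<^sup>2)"
  using complex_norm_square[of z] by (simp add: mult.commute)

lemma sum_sq_zero: assumes "(\<Sum>p<a. cnj (v p) * v p) = 0" "p < (a::nat)" shows "v p = (0::complex)"
proof -
  have "complex_of_real (\<Sum>p<a. (norm (v p))\<^sup>2) = 0" using assms(1) by (simp add: cnj_mult_self)
  then have "(\<Sum>p<a. (norm (v p))\<^sup>2) = 0" by (simp only: of_real_eq_0_iff)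
  then have "(norm (v p))\<^sup>2 = 0" using assms(2) by (subst (asm) sum_nonneg_eq_0_iff) auto
  then show ?thesis by simp
qed

lemma smult_one_mult: "(c \<cdot>\<^sub>m 1\<^sub>m m) * (d \<cdot>\<^sub>m 1\<^sub>m m) = ((c * d) :: complex) \<cdot>\<^sub>m 1\<^sub>m m"
proof (rule eq_matI)
  fix i j assume "i < dim_row ((c * d) \<cdot>\<^sub>m 1\<^sub>m m)" "j < dim_col ((c * d) \<cdot>\<^sub>m 1\<^sub>m m)"
  then have ij: "i < m" "j < m" by auto
  have "((c \<cdot>\<^sub>m 1\<^sub>m m) * (d \<cdot>\<^sub>m 1\<^sub>m m)) $$ (i,j) = (\<Sum>l<m. (c \<cdot>\<^sub>m 1\<^sub>m m) $$ (i,l) * (d \<cdot>\<^sub>m 1\<^sub>m m) $$ (l,j))"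
    by (rule mult_index) (use ij in auto)
  also have "\<dots> = (\<Sum>l<m. if l = j then (if i = j then c * d else 0) else 0)"
    by (intro sum.cong refl) (use ij in auto)
  finally show "((c \<cdot>\<^sub>m 1\<^sub>m m) * (d \<cdot>\<^sub>m 1\<^sub>m m)) $$ (i,j) = ((c * d) \<cdot>\<^sub>m 1\<^sub>m m) $$ (i,j)" using ij by simp
qed auto

context setting begin

definition Zb :: "nat \<Rightarrow> complex mat" where "Zb i = W * Ymat i 0 0 * adj W"

lemma Zb_index: assumes i: "i<k" and uv: "u < a*b" "v < a*b"
  shows "Zb i $$ (u,v) = (\<Sum>x<dL i. W $$ (u, idx i x 0) * cnj (W $$ (v, idx i x 0)))"
proof -
  have r0: "0 < dR i" using posR i by auto
  have WYc: "W * Ymat i 0 0 \<in> carrier_mat (a*b) n" by (rule carrier_matI) simp_all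
  have "Zb i $$ (u,v) = (\<Sum>g<n. (W * Ymat i 0 0) $$ (u,g) * adj W $$ (g,v))"
    unfolding Zb_def by (rule mult_index[OF WYc adj_carrier[OF W_carrier] uv])
  also have "\<dots> = (\<Sum>j<k. \<Sum>y<dL j. \<Sum>t<dR j. (W * Ymat i 0 0) $$ (u,idx j y t) * adj W $$ (idx j y t,v))"
    by (rule sum_n)
  also have "\<dots> = (\<Sum>j<k. \<Sum>y<dL j. \<Sum>t<dR j. if j = i \<and> t = 0 then W $$ (u, idx j y t) * cnj (W $$ (v, idx j y t)) else 0)"
    by (intro sum.cong refl) (use i r0 uv idx_lt in \<open>auto simp: YR[OF W_carrier]\<close>)
  also have "\<dots> = (\<Sum>x<dL i. W $$ (u, idx i x 0) * cnj (W $$ (v, idx i x 0)))"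
    by (rule sum3_delta2[OF i r0])
  finally show ?thesis .
qed

definition Phi :: "nat \<Rightarrow> nat \<Rightarrow> nat \<Rightarrow> complex mat" where
  "Phi i c0 c1 = mat a a (\<lambda>(p,p'). Zb i $$ (p*b+c1, p'*b+c0))"

lemma Phi_carrier: "Phi i c0 c1 \<in> carrier_mat a a" by (simp add: Phi_def)

lemma Phi_comm_cons: assumes i: "i<k" and c: "c0<b" "c1<b" and At: "At \<in> cons_L a b \<chi>"
  shows "At * Phi i c0 c1 = Phi i c0 c1 * At"
proof -
  have Atc: "At \<in> carrier_mat a a" using At by (simp add: cons_L_def)
  have r0: "0 < dR i" using posR i by auto
  have Zc: "Zb i \<in> carrier_mat (a*b) (a*b)" unfolding Zb_def by (rule carrier_matI) simp_all
  have L: "tensor_id_right a b At * Zb i = Zb i * tensor_id_right a b At"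
    unfolding Zb_def by (rule lean_comm[OF Ymat_carrier _ At]) (rule Y_comm[OF i r0 r0])
  show ?thesis
  proof (rule eq_matI)
    fix p p'' assume "p < dim_row (Phi i c0 c1 * At)" "p'' < dim_col (Phi i c0 c1 * At)"
    then have pp: "p < a" "p'' < a" using Atc by (auto simp: Phi_def)
    have "(At * Phi i c0 c1) $$ (p,p'') = (\<Sum>p'<a. At $$ (p,p') * Phi i c0 c1 $$ (p',p''))"
      by (rule mult_index[OF Atc Phi_carrier pp])
    also have "\<dots> = (\<Sum>p'<a. At $$ (p,p') * Zb i $$ (p'*b+c1, p''*b+c0))"
      by (intro sum.cong refl) (use pp in \<open>simp add: Phi_def\<close>)
    also have "\<dots> = (tensor_id_right a b At * Zb i) $$ (p*b+c1, p''*b+c0)"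
      by (rule TR_mult_left[symmetric, OF Zc pp(1) c(2)]) (use pp c divmod_lt in auto)
    also have "\<dots> = (Zb i * tensor_id_right a b At) $$ (p*b+c1, p''*b+c0)" unfolding L ..
    also have "\<dots> = (\<Sum>p'<a. Zb i $$ (p*b+c1, p'*b+c0) * At $$ (p',p''))"
      by (rule TR_mult_right[OF Zc pp(2) c(1)]) (use pp c divmod_lt in auto)
    also have "\<dots> = (\<Sum>p'<a. Phi i c0 c1 $$ (p,p') * At $$ (p',p''))"
      by (intro sum.cong refl) (use pp in \<open>simp add: Phi_def\<close>)
    also have "\<dots> = (Phi i c0 c1 * At) $$ (p,p'')"
      by (rule mult_index[OF Phi_carrier Atc pp, symmetric])
    finally show "(At * Phi i c0 c1) $$ (p,p'') = (Phi i c0 c1 * At) $$ (p,p'')" .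
  qed (use Atc in \<open>auto simp: Phi_def\<close>)
qed

lemma Phi_comm: assumes i: "i<k" and c: "c0<b" "c1<b" "d0<b" "d1<b"
  shows "Phi i c0 c1 * Phi i d0 d1 = Phi i d0 d1 * Phi i c0 c1"
proof -
  have inC: "Phi i e0 e1 \<in> commutant a (cons_L a b \<chi>)" if "e0<b" "e1<b" for e0 e1
    unfolding commutant_def using Phi_carrier Phi_comm_cons[OF i that] by auto
  have "commutant a (cons_L a b \<chi>) \<subseteq> cons_L a b \<chi>"
    using ln unfolding lean_def center_def by auto
  then have "Phi i c0 c1 \<in> cons_L a b \<chi>" using inC[OF c(1,2)] by auto
  then show ?thesis using inC[OF c(3,4)] unfolding commutant_def by auto
qed

definition Kb :: "nat \<Rightarrow> nat \<Rightarrow> complex mat" where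
  "Kb i c = mat a (dL i) (\<lambda>(p,x). psi i x 0 p c)"

lemma Kb_carrier: "Kb i c \<in> carrier_mat a (dL i)" by (simp add: Kb_def)
lemma Kb_dims[simp]: "dim_row (Kb i c) = a" "dim_col (Kb i c) = dL i" by (simp_all add: Kb_def)

definition tau :: "nat \<Rightarrow> nat \<Rightarrow> nat \<Rightarrow> complex" where
  "tau i al be = (\<Sum>p<a. cnj (psi i 0 0 p al) * psi i 0 0 p be)"

lemma Phi_K: assumes i: "i<k" and c: "c0<b" "c1<b"
  shows "Phi i c0 c1 = Kb i c1 * adj (Kb i c0)"
proof (rule eq_matI)
  fix p p' assume "p < dim_row (Kb i c1 * adj (Kb i c0))" "p' < dim_col (Kb i c1 * adj (Kb i c0))"
  then have pp: "p<a" "p'<a" by auto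
  have "(Kb i c1 * adj (Kb i c0)) $$ (p,p') = (\<Sum>x<dL i. Kb i c1 $$ (p,x) * adj (Kb i c0) $$ (x,p'))"
    by (rule mult_index[OF Kb_carrier adj_carrier[OF Kb_carrier] pp])
  also have "\<dots> = (\<Sum>x<dL i. W $$ (p*b+c1, idx i x 0) * cnj (W $$ (p'*b+c0, idx i x 0)))"
    by (intro sum.cong refl) (use pp in \<open>simp add: Kb_def psi_def\<close>)
  also have "\<dots> = Zb i $$ (p*b+c1, p'*b+c0)"
    by (rule Zb_index[symmetric, OF i]) (use pp c divmod_lt in auto)
  finally show "Phi i c0 c1 $$ (p,p') = (Kb i c1 * adj (Kb i c0)) $$ (p,p')" using pp by (simp add: Phi_def)
qed (auto simp: Phi_def)

lemma KK: assumes i: "i<k" and c: "al<b" "be<b"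
  shows "adj (Kb i al) * Kb i be = tau i al be \<cdot>\<^sub>m 1\<^sub>m (dL i)"
proof (rule eq_matI)
  fix x y assume "x < dim_row (tau i al be \<cdot>\<^sub>m 1\<^sub>m (dL i))" "y < dim_col (tau i al be \<cdot>\<^sub>m 1\<^sub>m (dL i))"
  then have xy: "x < dL i" "y < dL i" by auto
  have r0: "0 < dR i" using posR i by auto
  have "(adj (Kb i al) * Kb i be) $$ (x,y) = (\<Sum>p<a. adj (Kb i al) $$ (x,p) * Kb i be $$ (p,y))"
    by (rule mult_index[OF adj_carrier[OF Kb_carrier] Kb_carrier xy])
  also have "\<dots> = (\<Sum>p<a. cnj (psi i x 0 p al) * psi i y 0 p be)"
    by (intro sum.cong refl) (use xy in \<open>simp add: Kb_def\<close>)
  also have "\<dots> = (if x = y then tau i al be else 0)"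
  proof (cases "x = y")
    case True
    then show ?thesis unfolding tau_def using GR_diag[OF i xy(1) r0 r0 c] by simp
  next
    case False
    then show ?thesis using GR_off[OF i xy(1) r0 i xy(2) r0 _ c] by simp
  qed
  finally show "(adj (Kb i al) * Kb i be) $$ (x,y) = (tau i al be \<cdot>\<^sub>m 1\<^sub>m (dL i)) $$ (x,y)" using xy by simp
qed auto

lemma key_identity: assumes i: "i<k" and c: "al<b" "be<b" "c0<b" "c1<b" "d0<b" "d1<b"
  shows "tau i al c1 * tau i c0 d1 * tau i d0 be = tau i al d1 * tau i d0 c1 * tau i c0 be"
proof -
  have gen: "adj (Kb i al) * (Phi i e0 e1 * Phi i f0 f1) * Kb i be = (tau i al e1 * tau i e0 f1 * tau i f0 be) \<cdot>\<^sub>m 1\<^sub>m (dL i)"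
    if e: "e0<b" "e1<b" "f0<b" "f1<b" for e0 e1 f0 f1
  proof -
    have "adj (Kb i al) * (Phi i e0 e1 * Phi i f0 f1) * Kb i be =
       adj (Kb i al) * (Kb i e1 * adj (Kb i e0) * (Kb i f1 * adj (Kb i f0))) * Kb i be"
      using Phi_K[OF i e(1,2)] Phi_K[OF i e(3,4)] by simp
    also have "\<dots> = (adj (Kb i al) * Kb i e1) * ((adj (Kb i e0) * Kb i f1) * (adj (Kb i f0) * Kb i be))"
      by (simp add: assoc')
    also have "\<dots> = (tau i al e1 \<cdot>\<^sub>m 1\<^sub>m (dL i)) * ((tau i e0 f1 \<cdot>\<^sub>m 1\<^sub>m (dL i)) * (tau i f0 be \<cdot>\<^sub>m 1\<^sub>m (dL i)))"
      using KK i c e by simp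
    also have "\<dots> = (tau i al e1 * tau i e0 f1 * tau i f0 be) \<cdot>\<^sub>m 1\<^sub>m (dL i)"
      by (simp add: smult_one_mult mult.assoc)
    finally show ?thesis .
  qed
  have "(tau i al c1 * tau i c0 d1 * tau i d0 be) \<cdot>\<^sub>m 1\<^sub>m (dL i) = (tau i al d1 * tau i d0 c1 * tau i c0 be) \<cdot>\<^sub>m 1\<^sub>m (dL i)"
    using gen[of c0 c1 d0 d1] gen[of d0 d1 c0 c1] Phi_comm[OF i c(3-6)] c by simp
  then have "((tau i al c1 * tau i c0 d1 * tau i d0 be) \<cdot>\<^sub>m 1\<^sub>m (dL i)) $$ (0,0) = ((tau i al d1 * tau i d0 c1 * tau i c0 be) \<cdot>\<^sub>m 1\<^sub>m (dL i)) $$ (0,0)"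
    by (rule arg_cong)
  moreover have "0 < dL i" using posL i by auto
  ultimately show ?thesis by simp
qed

end


lemma expand4: "(\<Sum>p\<in>S. cnj (A p * t1 - B p * t2) * (A p * t1 - B p * t2)) =
   (\<Sum>p\<in>S. cnj (A p) * A p) * (cnj t1 * t1) - (\<Sum>p\<in>S. cnj (A p) * B p) * (cnj t1 * t2)
   - (\<Sum>p\<in>S. cnj (B p) * A p) * (cnj t2 * t1) + (\<Sum>p\<in>S. cnj (B p) * B p) * (cnj t2 * (t2::complex))"
proof -
  have "(\<Sum>p\<in>S. cnj (A p * t1 - B p * t2) * (A p * t1 - B p * t2)) =
     (\<Sum>p\<in>S. cnj (A p) * A p * (cnj t1 * t1) - cnj (A p) * B p * (cnj t1 * t2)
        - cnj (B p) * A p * (cnj t2 * t1) + cnj (B p) * B p * (cnj t2 * t2))"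
    by (intro sum.cong refl) (simp add: algebra_simps)
  also have "\<dots> = (\<Sum>p\<in>S. cnj (A p) * A p) * (cnj t1 * t1) - (\<Sum>p\<in>S. cnj (A p) * B p) * (cnj t1 * t2)
   - (\<Sum>p\<in>S. cnj (B p) * A p) * (cnj t2 * t1) + (\<Sum>p\<in>S. cnj (B p) * B p) * (cnj t2 * t2)"
    by (simp add: sum.distrib sum_subtractf sum_distrib_right)
  finally show ?thesis .
qed

lemma alg_zero: assumes h: "A*D = C*B" shows "A*(D*D) - C*(D*B) - B*(C*D) + D*(C*B) = (0::complex)"
proof -
  have "A*(D*D) = C*B*D" using h by (metis mult.assoc)
  then show ?thesis by (simp add: algebra_simps)
qed

context setting begin

lemma tau_herm: "tau i be al = cnj (tau i al be)"
  unfolding tau_def by (simp add: mult.commute)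

lemma tau_trace: assumes i: "i<k" shows "(\<Sum>c<b. tau i c c) = 1"
proof -
  have p: "0 < dL i" "0 < dR i" using posL posR i by auto
  have "(\<Sum>c<b. tau i c c) = (\<Sum>p<a. \<Sum>q<b. cnj (psi i 0 0 p q) * psi i 0 0 p q)"
    unfolding tau_def by (rule sum.swap)
  also have "\<dots> = 1" using orth[OF i p(1) p(2) i p(1) p(2)] by simp
  finally show ?thesis .
qed

lemma tau_nz: assumes i: "i<k" shows "\<exists>c<b. tau i c c \<noteq> 0"
proof (rule ccontr)
  assume "\<not> (\<exists>c<b. tau i c c \<noteq> 0)"
  then have "(\<Sum>c<b. tau i c c) = 0" by simp
  then show False using tau_trace[OF i] by simp
qed

lemma rank1: assumes i: "i<k" and c: "c<b" "tau i c c \<noteq> 0" and q: "al<b" "q<b"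
  shows "tau i al q * tau i c c = tau i al c * tau i c q"
proof -
  have "tau i al q * tau i c c * tau i c c = tau i al c * tau i c q * tau i c c"
    using key_identity[OF i q(1) c(1) c(1) q(2) c(1) c(1)] by (simp add: mult.commute mult.left_commute)
  then show ?thesis using c(2) by simp
qed

lemma prod0: assumes i: "i<k" and c: "c<b" "tau i c c \<noteq> 0" and x: "x<dL i" and pq: "p<a" "q<b"
  shows "psi i x 0 p q * tau i c c = psi i x 0 p c * tau i c q"
proof -
  have r0: "0 < dR i" using posR i by auto
  have G: "(\<Sum>p<a. cnj (psi i x 0 p al) * psi i x 0 p be) = tau i al be" if "al<b" "be<b" for al be
    unfolding tau_def using GR_diag[OF i x r0 r0 that] by simp
  define v where "v p = psi i x 0 p q * tau i c c - psi i x 0 p c * tau i c q" for p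
  have e1: "cnj (tau i c c) = tau i c c" using tau_herm[of i c c] by simp
  have e2: "tau i q q * tau i c c = tau i q c * tau i c q" by (rule rank1[OF i c pq(2) pq(2)])
  have e3: "tau i q c = cnj (tau i c q)" by (rule tau_herm)
  have "(\<Sum>p<a. cnj (v p) * v p) =
     tau i q q * (cnj (tau i c c) * tau i c c) - tau i q c * (cnj (tau i c c) * tau i c q)
     - tau i c q * (cnj (tau i c q) * tau i c c) + tau i c c * (cnj (tau i c q) * tau i c q)"
    unfolding v_def expand4 using G pq c by simp
  also have "\<dots> = 0" unfolding e1 e3 by (rule alg_zero[OF e2[unfolded e3]])
  finally have "v p = 0" using sum_sq_zero pq by blast
  then show ?thesis unfolding v_def by simp
qed

lemma right_Y: assumes i: "i<k" and r: "r<dR i"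
  shows "\<exists>C\<in>carrier_mat b b. W * Ymat i r 0 = tensor_id_left a b C * W"
proof -
  have r0: "0 < dR i" using posR i by auto
  show ?thesis by (rule right_from_D[OF Ymat_carrier]) (rule Y_comm[OF i r r0])
qed

lemma psi_r: assumes i: "i<k" and r: "r<dR i" and C: "C \<in> carrier_mat b b" "W * Ymat i r 0 = tensor_id_left a b C * W"
  and x: "x<dL i" and pq: "p<a" "q<b"
  shows "psi i x r p q = (\<Sum>q'<b. C $$ (q,q') * psi i x 0 p q')"
proof -
  have r0: "0 < dR i" using posR i by auto
  have "(W * Ymat i r 0) $$ (p*b+q, idx i x 0) = W $$ (p*b+q, idx i x r)"
    using YR[OF W_carrier i x r0, of "p*b+q" i r 0] i r pq divmod_lt by simp
  moreover have "(tensor_id_left a b C * W) $$ (p*b+q, idx i x 0) = (\<Sum>q'<b. C $$ (q,q') * W $$ (p*b+q', idx i x 0))"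
    by (rule TL_mult_left[OF W_carrier pq]) (use idx_lt i x r0 in auto)
  ultimately show ?thesis unfolding psi_def using C(2) by simp
qed

lemma product: "\<exists>\<sigma> \<theta>. \<forall>i<k. \<forall>x<dL i. \<forall>r<dR i. \<forall>p<a. \<forall>q<b. psi i x r p q = \<sigma> i x p * \<theta> i r q"
proof -
  define c where "c i = (SOME c. c<b \<and> tau i c c \<noteq> 0)" for i
  have c: "c i < b" "tau i (c i) (c i) \<noteq> 0" if "i<k" for i
    using someI_ex[OF tau_nz[OF that, unfolded Bex_def]] unfolding c_def by auto
  have "\<forall>i r. \<exists>C. i<k \<and> r<dR i \<longrightarrow> C \<in> carrier_mat b b \<and> W * Ymat i r 0 = tensor_id_left a b C * W"
    using right_Y by blast
  then obtain Cf where Cf: "\<And>i r. i<k \<Longrightarrow> r<dR i \<Longrightarrow> Cf i r \<in> carrier_mat b b \<and> W * Ymat i r 0 = tensor_id_left a b (Cf i r) * W"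
    by metis
  define \<sigma> where "\<sigma> i x p = psi i x 0 p (c i)" for i x p
  define \<theta>0 where "\<theta>0 i q = tau i (c i) q / tau i (c i) (c i)" for i q
  define \<theta> where "\<theta> i r q = (\<Sum>q'<b. Cf i r $$ (q,q') * \<theta>0 i q')" for i r q
  have P0: "psi i x 0 p q = \<sigma> i x p * \<theta>0 i q" if "i<k" "x<dL i" "p<a" "q<b" for i x p q
    using prod0[OF that(1) c[OF that(1)] that(2-4)] c[OF that(1)] unfolding \<sigma>_def \<theta>0_def
    by (simp add: field_simps)
  have "psi i x r p q = \<sigma> i x p * \<theta> i r q" if "i<k" "x<dL i" "r<dR i" "p<a" "q<b" for i x r p q
  proof -
    have "psi i x r p q = (\<Sum>q'<b. Cf i r $$ (q,q') * psi i x 0 p q')"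
      by (rule psi_r[OF that(1,3) conjunct1[OF Cf[OF that(1,3)]] conjunct2[OF Cf[OF that(1,3)]] that(2,4,5)])
    also have "\<dots> = (\<Sum>q'<b. Cf i r $$ (q,q') * (\<sigma> i x p * \<theta>0 i q'))"
      by (intro sum.cong refl) (use P0 that in auto)
    also have "\<dots> = \<sigma> i x p * \<theta> i r q" unfolding \<theta>_def by (simp add: sum_distrib_left algebra_simps)
    finally show ?thesis .
  qed
  then show ?thesis by blast
qed

end


lemma sum_factor: "(\<Sum>p<a. \<Sum>q<b. cnj (s1 p * t1 q) * (s2 p * t2 q)) =
   (\<Sum>p<(a::nat). cnj (s1 p) * s2 p) * (\<Sum>q<(b::nat). cnj (t1 q) * (t2 q::complex))"
  unfolding sum_product by (intro sum.cong refl) (simp add: algebra_simps)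

lemma nz_coord: assumes "(\<Sum>q<b. cnj (t q) * t q) = (1::complex)" shows "\<exists>q<(b::nat). t q \<noteq> 0"
proof (rule ccontr)
  assume "\<not> (\<exists>q<b. t q \<noteq> 0)"
  then have "(\<Sum>q<b. cnj (t q) * t q) = 0" by simp
  then show False using assms by simp
qed

context setting begin

lemma product_norm: "\<exists>s t. (\<forall>i<k. \<forall>x<dL i. \<forall>r<dR i. \<forall>p<a. \<forall>q<b. psi i x r p q = s i x p * t i r q)
    \<and> (\<forall>i<k. (\<Sum>q<b. cnj (t i 0 q) * t i 0 q) = 1)"
proof -
  obtain \<sigma> \<theta> where P: "\<And>i x r p q. i<k \<Longrightarrow> x<dL i \<Longrightarrow> r<dR i \<Longrightarrow> p<a \<Longrightarrow> q<b \<Longrightarrow> psi i x r p q = \<sigma> i x p * \<theta> i r q"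
    using product by metis
  define nt where "nt i = (\<Sum>q<b. (norm (\<theta> i 0 q))\<^sup>2)" for i
  define \<kappa> where "\<kappa> i = complex_of_real (sqrt (nt i))" for i
  have ntc: "(\<Sum>q<b. cnj (\<theta> i 0 q) * \<theta> i 0 q) = complex_of_real (nt i)" for i
    unfolding nt_def by (simp add: cnj_mult_self)
  have ntpos: "nt i > 0" if i: "i<k" for i
  proof -
    have p: "0 < dL i" "0 < dR i" using posL posR i by auto
    have "(\<Sum>p<a. \<Sum>q<b. cnj (psi i 0 0 p q) * psi i 0 0 p q) = 1" using orth[OF i p i p] by simp
    then have "(\<Sum>p<a. \<Sum>q<b. cnj (\<sigma> i 0 p * \<theta> i 0 q) * (\<sigma> i 0 p * \<theta> i 0 q)) = 1"
      using P[OF i p(1) p(2)] by simp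
    then have "(\<Sum>p<a. cnj (\<sigma> i 0 p) * \<sigma> i 0 p) * complex_of_real (nt i) = 1"
      unfolding sum_factor ntc .
    then have "nt i \<noteq> 0" by auto
    moreover have "nt i \<ge> 0" unfolding nt_def by (simp add: sum_nonneg)
    ultimately show ?thesis by simp
  qed
  define s where "s i x p = \<kappa> i * \<sigma> i x p" for i x p
  define t where "t i r q = \<theta> i r q / \<kappa> i" for i r q
  have 1: "psi i x r p q = s i x p * t i r q" if "i<k" "x<dL i" "r<dR i" "p<a" "q<b" for i x r p q
  proof -
    have "\<kappa> i \<noteq> 0" unfolding \<kappa>_def using ntpos[OF that(1)] by simp
    then show ?thesis using P[OF that] unfolding s_def t_def by (simp add: field_simps)
  qed
  have 2: "(\<Sum>q<b. cnj (t i 0 q) * t i 0 q) = 1" if i: "i<k" for i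
  proof -
    have k: "cnj (\<kappa> i) = \<kappa> i" "\<kappa> i * \<kappa> i = complex_of_real (nt i)"
      unfolding \<kappa>_def using ntpos[OF i] by (simp_all flip: of_real_mult)
    have "(\<Sum>q<b. cnj (t i 0 q) * t i 0 q) = (\<Sum>q<b. cnj (\<theta> i 0 q) * \<theta> i 0 q) / (\<kappa> i * \<kappa> i)"
      unfolding t_def by (simp add: sum_divide_distrib k(1))
    also have "\<dots> = 1" unfolding ntc k(2) using ntpos[OF i] by simp
    finally show ?thesis .
  qed
  show ?thesis using 1 2 by blast
qed

lemma structure_thm: "\<exists>s t. (\<forall>i<k. \<forall>x<dL i. \<forall>r<dR i. \<forall>p<a. \<forall>q<b. psi i x r p q = s i x p * t i r q)
    \<and> (\<forall>i<k. \<forall>x<dL i. \<forall>j<k. \<forall>y<dL j. (\<Sum>p<a. cnj (s i x p) * s j y p) = (if i = j \<and> x = y then 1 else 0))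
    \<and> (\<forall>i<k. \<forall>r<dR i. \<forall>j<k. \<forall>u<dR j. (\<Sum>q<b. cnj (t i r q) * t j u q) = (if i = j \<and> r = u then 1 else 0))"
proof -
  from product_norm obtain s t where PN: "(\<forall>i<k. \<forall>x<dL i. \<forall>r<dR i. \<forall>p<a. \<forall>q<b. psi i x r p q = s i x p * t i r q)
    \<and> (\<forall>i<k. (\<Sum>q<b. cnj (t i 0 q) * t i 0 q) = 1)" by blast
  have P: "\<And>i x r p q. i<k \<Longrightarrow> x<dL i \<Longrightarrow> r<dR i \<Longrightarrow> p<a \<Longrightarrow> q<b \<Longrightarrow> psi i x r p q = s i x p * t i r q"
    using PN by blast
  have N: "\<And>i. i<k \<Longrightarrow> (\<Sum>q<b. cnj (t i 0 q) * t i 0 q) = 1" using PN by blast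
  define S where "S i x j y = (\<Sum>p<a. cnj (s i x p) * s j y p)" for i x j y
  define T where "T i r j u = (\<Sum>q<b. cnj (t i r q) * t j u q)" for i r j u
  have ST: "S i x j y * T i r j u = (if i = j \<and> x = y \<and> r = u then 1 else 0)"
    if "i<k" "x<dL i" "r<dR i" "j<k" "y<dL j" "u<dR j" for i x r j y u
  proof -
    have "(\<Sum>p<a. \<Sum>q<b. cnj (s i x p * t i r q) * (s j y p * t j u q)) = (if i = j \<and> x = y \<and> r = u then 1 else 0)"
      using orth[OF that] P that by simp
    then show ?thesis unfolding S_def T_def sum_factor .
  qed
  have p0: "0 < dL i" "0 < dR i" if "i<k" for i using posL posR that by auto
  have T0: "T i 0 i 0 = 1" if "i<k" for i using N that unfolding T_def by simp
  have Sd: "S i x i x = 1" if "i<k" "x<dL i" for i x using ST[OF that p0(2)[OF that(1)] that p0(2)[OF that(1)]] T0[OF that(1)] by simp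
  have Td: "T i r i r = 1" if "i<k" "r<dR i" for i r
    using ST[OF that(1) p0(1)[OF that(1)] that(2) that(1) p0(1)[OF that(1)] that(2)] Sd[OF that(1) p0(1)[OF that(1)]] by simp
  have Sblk: "S i x i y = 0" if "i<k" "x<dL i" "y<dL i" "x \<noteq> y" for i x y
    using ST[OF that(1,2) p0(2)[OF that(1)] that(1,3) p0(2)[OF that(1)]] T0[OF that(1)] that(4) by simp
  have Tblk: "T i r i u = 0" if "i<k" "r<dR i" "u<dR i" "r \<noteq> u" for i r u
    using ST[OF that(1) p0(1)[OF that(1)] that(2) that(1) p0(1)[OF that(1)] that(3)] Sd[OF that(1) p0(1)[OF that(1)]] that(4) by simp
  have tnz: "\<exists>q<b. t i 0 q \<noteq> 0" if "i<k" for i using nz_coord[OF N[OF that]] .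
  have snz: "\<exists>p<a. s i 0 p \<noteq> 0" if "i<k" for i using nz_coord[where b=a and t="s i 0"] Sd[OF that p0(1)[OF that]] unfolding S_def by simp
  have Scross: "S i x j y = 0" if h: "i<k" "x<dL i" "j<k" "y<dL j" "i \<noteq> j" for i x j y
  proof -
    obtain q0 where q0: "q0<b" "t i 0 q0 \<noteq> 0" using tnz[OF h(1)] by blast
    obtain q1 where q1: "q1<b" "t j 0 q1 \<noteq> 0" using tnz[OF h(3)] by blast
    have "(\<Sum>p<a. cnj (psi i x 0 p q0) * psi j y 0 p q1) = 0"
      by (rule GR_off[OF h(1,2) p0(2)[OF h(1)] h(3,4) p0(2)[OF h(3)]]) (use that q0 q1 in auto)
    then have "(\<Sum>p<a. cnj (s i x p * t i 0 q0) * (s j y p * t j 0 q1)) = 0"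
      using P h q0 q1 p0 by simp
    then have "cnj (t i 0 q0) * t j 0 q1 * S i x j y = 0"
      unfolding S_def by (simp add: sum_distrib_left algebra_simps)
    then show ?thesis using q0 q1 by simp
  qed
  have Tcross: "T i r j u = 0" if h: "i<k" "r<dR i" "j<k" "u<dR j" "i \<noteq> j" for i r j u
  proof -
    obtain p0' where pa: "p0'<a" "s i 0 p0' \<noteq> 0" using snz[OF h(1)] by blast
    obtain p1 where pb: "p1<a" "s j 0 p1 \<noteq> 0" using snz[OF h(3)] by blast
    have "(\<Sum>q<b. cnj (psi i 0 r p0' q) * psi j 0 u p1 q) = 0"
      by (rule GL_off[OF h(1) p0(1)[OF h(1)] h(2,3) p0(1)[OF h(3)] h(4,5) pa(1) pb(1)])
    then have "(\<Sum>q<b. cnj (s i 0 p0' * t i r q) * (s j 0 p1 * t j u q)) = 0"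
      using P h pa pb p0 by simp
    then have "cnj (s i 0 p0') * s j 0 p1 * T i r j u = 0"
      unfolding T_def by (simp add: sum_distrib_left algebra_simps)
    then show ?thesis using pa pb by simp
  qed
  have "\<forall>i<k. \<forall>x<dL i. \<forall>j<k. \<forall>y<dL j. S i x j y = (if i = j \<and> x = y then 1 else 0)"
  proof (intro allI impI)
    fix i x j y assume h: "i<k" "x<dL i" "j<k" "y<dL j"
    show "S i x j y = (if i = j \<and> x = y then 1 else 0)"
    proof (cases "i = j")
      case True then show ?thesis using Sd Sblk h by (cases "x = y") auto
    next
      case False then show ?thesis using Scross h by auto
    qed
  qed
  moreover have "\<forall>i<k. \<forall>r<dR i. \<forall>j<k. \<forall>u<dR j. T i r j u = (if i = j \<and> r = u then 1 else 0)"
  proof (intro allI impI)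
    fix i r j u assume h: "i<k" "r<dR i" "j<k" "u<dR j"
    show "T i r j u = (if i = j \<and> r = u then 1 else 0)"
    proof (cases "i = j")
      case True then show ?thesis using Td Tblk h by (cases "r = u") auto
    next
      case False then show ?thesis using Tcross h by auto
    qed
  qed
  ultimately show ?thesis using P unfolding S_def T_def by blast
qed

end


lemma conj_entry: assumes A: "A \<in> carrier_mat N M" and B: "B \<in> carrier_mat M M" and uv: "u < N" "v < N"
  shows "(A * B * adj A) $$ (u,v) = (\<Sum>f<M. \<Sum>g<M. A $$ (u,f) * B $$ (f,g) * cnj (A $$ (v,g)))"
proof -
  have AB: "A * B \<in> carrier_mat N M" using A B by (intro carrier_matI) auto
  have "(A * B * adj A) $$ (u,v) = (\<Sum>g<M. (A * B) $$ (u,g) * adj A $$ (g,v))"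
    by (rule mult_index[OF AB adj_carrier[OF A] uv])
  also have "\<dots> = (\<Sum>g<M. (\<Sum>f<M. A $$ (u,f) * B $$ (f,g)) * cnj (A $$ (v,g)))"
    by (intro sum.cong refl) (use A B uv in \<open>simp add: mult_index[OF A B]\<close>)
  also have "\<dots> = (\<Sum>g<M. \<Sum>f<M. A $$ (u,f) * B $$ (f,g) * cnj (A $$ (v,g)))"
    by (simp add: sum_distrib_right)
  also have "\<dots> = (\<Sum>f<M. \<Sum>g<M. A $$ (u,f) * B $$ (f,g) * cnj (A $$ (v,g)))"
    by (rule sum.swap)
  finally show ?thesis .
qed

lemma ptrace_index: "p < a \<Longrightarrow> p' < a \<Longrightarrow> ptrace_right a b M $$ (p,p') = (\<Sum>q<b. M $$ (p*b+q, p'*b+q))"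
  by (simp add: ptrace_right_def)

lemma ptrace_carrier: "ptrace_right a b M \<in> carrier_mat a a"
  by (simp add: ptrace_right_def)

lemma blk_cond_gen: assumes "c < d i"
  shows "(offs d i' \<le> offs d i + c \<and> offs d i + c < offs d i' + d i') \<longleftrightarrow> i' = i"
proof
  assume h: "offs d i' \<le> offs d i + c \<and> offs d i + c < offs d i' + d i'"
  then have "offs d i' + (offs d i + c - offs d i') = offs d i + c" "offs d i + c - offs d i' < d i'" by auto
  then show "i' = i" using offs_inj[of _ d i' c i] assms by metis
qed (use assms in auto)

context setting begin

lemma alg_trace_index: assumes X: "X \<in> carrier_mat n n" and v: "i<k" "x<dL i" "j<k" "y<dL j"
  shows "alg_trace k dL dR V X $$ (offs dL i + x, offs dL j + y) =
    (if i = j then (\<Sum>u<dR i. (V * X * adj V) $$ (idx i x u, idx i y u)) else 0)"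
proof -
  define Y where "Y = V * X * adj V"
  have Yc: "Y \<in> carrier_mat n n" unfolding Y_def using X by (intro carrier_matI) auto
  define m where "m = offs dL k"
  have msum: "(\<Sum>i<k. dL i) = m" unfolding m_def offs_def ..
  define T where "T i' = ptrace_right (dL i') (dR i') (adj (embed n (offs PP i') (PP i')) * Y * embed n (offs PP i') (PP i'))" for i'
  have gh: "offs dL i + x < m" "offs dL j + y < m" unfolding m_def using v offs_lt by auto
  have "alg_trace k dL dR V X $$ (offs dL i + x, offs dL j + y) =
     (\<Sum>i'<k. (embed m (offs dL i') (dL i') * T i' * adj (embed m (offs dL i') (dL i'))) $$ (offs dL i + x, offs dL j + y))"
    unfolding alg_trace_def Let_def aw_sum msum T_def Y_def[symmetric] using gh by (simp add: mat_sum_index)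
  also have "\<dots> = (\<Sum>i'<k. if i' = i \<and> i' = j then T i' $$ (x, y) else 0)"
  proof (intro sum.cong refl)
    fix i' assume "i' \<in> {..<k}"
    then have le: "offs dL i' + dL i' \<le> m" unfolding m_def using offs_mono[of i' k dL] by auto
    have Tc: "T i' \<in> carrier_mat (dL i') (dL i')" unfolding T_def by (rule ptrace_carrier)
    show "(embed m (offs dL i') (dL i') * T i' * adj (embed m (offs dL i') (dL i'))) $$ (offs dL i + x, offs dL j + y) =
       (if i' = i \<and> i' = j then T i' $$ (x, y) else 0)"
      apply (subst embed_conj[OF le Tc gh])
      using blk_cond_gen[of x dL i i'] blk_cond_gen[of y dL j i'] v by auto
  qed
  also have "\<dots> = (if i = j then T i $$ (x,y) else 0)"
    using v by (cases "i = j") (auto intro!: sum.neutral)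
  finally have ch: "alg_trace k dL dR V X $$ (offs dL i + x, offs dL j + y) = (if i = j then T i $$ (x,y) else 0)" .
  have Ti: "T i $$ (x,y) = (\<Sum>u<dR i. Y $$ (idx i x u, idx i y u))" if ij: "i = j"
  proof -
    have yi: "y < dL i" using v ij by simp
    have le: "offs PP i + PP i \<le> n" using n_eq offs_mono[of i k PP] v by auto
    have "T i $$ (x,y) = (\<Sum>u<dR i. (adj (embed n (offs PP i) (PP i)) * Y * embed n (offs PP i) (PP i)) $$ (x*dR i+u, y*dR i+u))"
      unfolding T_def using v yi by (simp add: ptrace_index)
    also have "\<dots> = (\<Sum>u<dR i. Y $$ (idx i x u, idx i y u))"
    proof (intro sum.cong refl)
      fix u assume "u \<in> {..<dR i}"
      then have c: "x*dR i + u < PP i" "y*dR i + u < PP i" using divmod_lt[of x "dL i" u "dR i"] divmod_lt[of y "dL i" u "dR i"] v yi by auto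
      show "(adj (embed n (offs PP i) (PP i)) * Y * embed n (offs PP i) (PP i)) $$ (x*dR i+u, y*dR i+u) = Y $$ (idx i x u, idx i y u)"
        unfolding idx_def by (rule embed_compress[OF le Yc c])
    qed
    finally show ?thesis .
  qed
  show ?thesis
  proof (cases "i = j")
    case True then show ?thesis using ch Ti unfolding Y_def by simp
  next
    case False then show ?thesis using ch by simp
  qed
qed

lemma AT_carrier: "alg_trace k dL dR V X \<in> carrier_mat (offs dL k) (offs dL k)"
  unfolding alg_trace_def Let_def offs_def by simp

lemma chi_conj: assumes X: "X \<in> carrier_mat n n"
  shows "\<chi> * X * adj \<chi> = W * (V * X * adj V) * adj W"
proof -
  have dX: "dim_row X = n" "dim_col X = n" using X by auto
  have "adj \<chi> = adj (W * V)" using WV by simp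
  also have "\<dots> = adj V * adj W" by (rule adj_mult[OF W_carrier V_carrier])
  finally have ac: "adj \<chi> = adj V * adj W" .
  have "\<chi> * X * adj \<chi> = W * V * X * (adj V * adj W)" using ac by (simp add: WV)
  also have "\<dots> = W * (V * X * adj V) * adj W" using dX by (simp add: assoc')
  finally show ?thesis .
qed

lemma final: "\<exists>U. isometry a (\<Sum>i<k. dL i) U \<and>
           (\<forall>X \<in> carrier_mat n n. chi_trace a b \<chi> X = U * alg_trace k dL dR V X * adj U)"
proof -
  from structure_thm obtain s t where PST:
    "(\<forall>i<k. \<forall>x<dL i. \<forall>r<dR i. \<forall>p<a. \<forall>q<b. psi i x r p q = s i x p * t i r q)
    \<and> (\<forall>i<k. \<forall>x<dL i. \<forall>j<k. \<forall>y<dL j. (\<Sum>p<a. cnj (s i x p) * s j y p) = (if i = j \<and> x = y then 1 else 0))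
    \<and> (\<forall>i<k. \<forall>r<dR i. \<forall>j<k. \<forall>u<dR j. (\<Sum>q<b. cnj (t i r q) * t j u q) = (if i = j \<and> r = u then 1 else 0))"
    by blast
  have P: "\<And>i x r p q. i<k \<Longrightarrow> x<dL i \<Longrightarrow> r<dR i \<Longrightarrow> p<a \<Longrightarrow> q<b \<Longrightarrow> W $$ (p*b+q, idx i x r) = s i x p * t i r q"
    using PST unfolding psi_def by blast
  have SO: "\<And>i x j y. i<k \<Longrightarrow> x<dL i \<Longrightarrow> j<k \<Longrightarrow> y<dL j \<Longrightarrow> (\<Sum>p<a. cnj (s i x p) * s j y p) = (if i = j \<and> x = y then 1 else 0)"
    using PST by blast
  have TO: "\<And>i r j u. i<k \<Longrightarrow> r<dR i \<Longrightarrow> j<k \<Longrightarrow> u<dR j \<Longrightarrow> (\<Sum>q<b. cnj (t i r q) * t j u q) = (if i = j \<and> r = u then 1 else 0)"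
    using PST by blast
  define m where "m = offs dL k"
  have msum: "(\<Sum>i<k. dL i) = m" unfolding m_def offs_def ..
  define U where "U = mat a m (\<lambda>(p,g). s (dblk dL k g) (doff dL k g) p)"
  have Uc: "U \<in> carrier_mat a m" unfolding U_def by simp
  have Uidx: "U $$ (p, offs dL i + x) = s i x p" if "i<k" "x<dL i" "p<a" for i x p
    using that offs_lt[where d=dL, OF that(1,2)] decode_enc[where d=dL, OF that(1,2)] unfolding U_def m_def by simp
  have iso: "isometry a (\<Sum>i<k. dL i) U"
    unfolding isometry_def msum
  proof (intro conjI Uc eq_matI)
    fix g h assume "g < dim_row (1\<^sub>m m)" "h < dim_col (1\<^sub>m m)"
    then have gh: "g < m" "h < m" by auto
    note dg = decode[OF gh(1)[unfolded m_def]] and dh = decode[OF gh(2)[unfolded m_def]]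
    have "(adj U * U) $$ (g,h) = (\<Sum>p<a. adj U $$ (g,p) * U $$ (p,h))"
      by (rule mult_index[OF adj_carrier[OF Uc] Uc gh])
    also have "\<dots> = (\<Sum>p<a. cnj (s (dblk dL k g) (doff dL k g) p) * s (dblk dL k h) (doff dL k h) p)"
      by (intro sum.cong refl) (use gh Uc in \<open>simp add: U_def\<close>)
    also have "\<dots> = (if dblk dL k g = dblk dL k h \<and> doff dL k g = doff dL k h then 1 else 0)"
      by (rule SO) (use dg dh in auto)
    also have "\<dots> = 1\<^sub>m m $$ (g,h)"
      using gh dg(3) dh(3) by (auto simp: index_one_mat)
    finally show "(adj U * U) $$ (g,h) = 1\<^sub>m m $$ (g,h)" .
  qed (use Uc in auto)
  have tr: "chi_trace a b \<chi> X = U * alg_trace k dL dR V X * adj U" if X: "X \<in> carrier_mat n n" for X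
  proof -
    define Y where "Y = V * X * adj V"
    have Yc: "Y \<in> carrier_mat n n" unfolding Y_def using X by (intro carrier_matI) auto
    have ATc: "alg_trace k dL dR V X \<in> carrier_mat m m" unfolding m_def by (rule AT_carrier)
    have AT: "alg_trace k dL dR V X $$ (offs dL i + x, offs dL j + y) = (if i = j then (\<Sum>u<dR i. Y $$ (idx i x u, idx i y u)) else 0)"
      if "i<k" "x<dL i" "j<k" "y<dL j" for i x j y
      unfolding Y_def by (rule alg_trace_index[OF X that])
    have WYc: "W * Y * adj W \<in> carrier_mat (a*b) (a*b)" using Yc by (intro carrier_matI) auto
    show ?thesis
    proof (rule eq_matI)
      fix p p' assume "p < dim_row (U * alg_trace k dL dR V X * adj U)" "p' < dim_col (U * alg_trace k dL dR V X * adj U)"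
      then have pp: "p < a" "p' < a" using Uc by auto
      have "chi_trace a b \<chi> X $$ (p,p') = (\<Sum>q<b. (W * Y * adj W) $$ (p*b+q, p'*b+q))"
        unfolding chi_trace_def chi_conj[OF X] Y_def[symmetric] using pp by (simp add: ptrace_index)
      also have "\<dots> = (\<Sum>q<b. \<Sum>f<n. \<Sum>g<n. W $$ (p*b+q,f) * Y $$ (f,g) * cnj (W $$ (p'*b+q,g)))"
        by (intro sum.cong refl) (use pp divmod_lt in \<open>auto simp: conj_entry[OF W_carrier Yc]\<close>)
      also have "\<dots> = (\<Sum>f<n. \<Sum>g<n. \<Sum>q<b. W $$ (p*b+q,f) * Y $$ (f,g) * cnj (W $$ (p'*b+q,g)))"
        by (simp add: sum.swap[of _ "{..<b}"])
      also have "\<dots> = (\<Sum>i<k. \<Sum>x<dL i. \<Sum>r<dR i. \<Sum>j<k. \<Sum>y<dL j. \<Sum>u<dR j.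
          \<Sum>q<b. W $$ (p*b+q,idx i x r) * Y $$ (idx i x r,idx j y u) * cnj (W $$ (p'*b+q,idx j y u)))"
        unfolding sum_n ..
      also have "\<dots> = (\<Sum>i<k. \<Sum>x<dL i. \<Sum>r<dR i. \<Sum>j<k. \<Sum>y<dL j. \<Sum>u<dR j.
          if j = i \<and> u = r then Y $$ (idx i x r,idx j y u) * s i x p * cnj (s j y p') else 0)"
      proof (intro sum.cong refl)
        fix i x r j y u assume h: "i \<in> {..<k}" "x \<in> {..<dL i}" "r \<in> {..<dR i}" "j \<in> {..<k}" "y \<in> {..<dL j}" "u \<in> {..<dR j}"
        have "(\<Sum>q<b. W $$ (p*b+q,idx i x r) * Y $$ (idx i x r,idx j y u) * cnj (W $$ (p'*b+q,idx j y u))) =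
           (\<Sum>q<b. (Y $$ (idx i x r,idx j y u) * s i x p * cnj (s j y p')) * cnj (cnj (t i r q) * t j u q))"
        proof (rule sum.cong[OF refl])
          fix q assume "q \<in> {..<b}"
          then have q: "q < b" by simp
          have w1: "W $$ (p*b+q, idx i x r) = s i x p * t i r q" by (rule P) (use h pp q in auto)
          have w2: "W $$ (p'*b+q, idx j y u) = s j y p' * t j u q" by (rule P) (use h pp q in auto)
          show "W $$ (p*b+q,idx i x r) * Y $$ (idx i x r,idx j y u) * cnj (W $$ (p'*b+q,idx j y u)) =
             (Y $$ (idx i x r,idx j y u) * s i x p * cnj (s j y p')) * cnj (cnj (t i r q) * t j u q)"
            unfolding w1 w2 by (simp add: algebra_simps)
        qed
        also have "\<dots> = (Y $$ (idx i x r,idx j y u) * s i x p * cnj (s j y p')) * cnj (\<Sum>q<b. cnj (t i r q) * t j u q)"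
          by (simp add: sum_distrib_left)
        also have "\<dots> = (if j = i \<and> u = r then Y $$ (idx i x r,idx j y u) * s i x p * cnj (s j y p') else 0)"
          using TO[of i r j u] h by auto
        finally show "(\<Sum>q<b. W $$ (p*b+q,idx i x r) * Y $$ (idx i x r,idx j y u) * cnj (W $$ (p'*b+q,idx j y u))) =
           (if j = i \<and> u = r then Y $$ (idx i x r,idx j y u) * s i x p * cnj (s j y p') else 0)" .
      qed
      also have "\<dots> = (\<Sum>i<k. \<Sum>x<dL i. \<Sum>r<dR i. \<Sum>y<dL i. Y $$ (idx i x r,idx i y r) * s i x p * cnj (s i y p'))"
        by (rule sum.cong[OF refl], rule sum.cong[OF refl], rule sum.cong[OF refl], rule sum3_delta2) auto
      finally have L: "chi_trace a b \<chi> X $$ (p,p') = (\<Sum>i<k. \<Sum>x<dL i. \<Sum>r<dR i. \<Sum>y<dL i. Y $$ (idx i x r,idx i y r) * s i x p * cnj (s i y p'))" .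
      have "(U * alg_trace k dL dR V X * adj U) $$ (p,p') = (\<Sum>g<m. \<Sum>h<m. U $$ (p,g) * alg_trace k dL dR V X $$ (g,h) * cnj (U $$ (p',h)))"
        by (rule conj_entry[OF Uc ATc pp])
      also have "\<dots> = (\<Sum>i<k. \<Sum>x<dL i. \<Sum>j<k. \<Sum>y<dL j. U $$ (p,offs dL i + x) * alg_trace k dL dR V X $$ (offs dL i + x, offs dL j + y) * cnj (U $$ (p',offs dL j + y)))"
        unfolding m_def offs_sum ..
      also have "\<dots> = (\<Sum>i<k. \<Sum>x<dL i. \<Sum>j<k. if i = j then (\<Sum>y<dL j. s i x p * (\<Sum>u<dR i. Y $$ (idx i x u, idx i y u)) * cnj (s j y p')) else 0)"
        by (intro sum.cong refl) (use pp in \<open>auto simp: Uidx AT\<close>)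
      also have "\<dots> = (\<Sum>i<k. \<Sum>x<dL i. \<Sum>y<dL i. s i x p * (\<Sum>u<dR i. Y $$ (idx i x u, idx i y u)) * cnj (s i y p'))"
        by (simp add: eq_commute[of _ "_::nat"])
      also have "\<dots> = (\<Sum>i<k. \<Sum>x<dL i. \<Sum>y<dL i. \<Sum>u<dR i. Y $$ (idx i x u, idx i y u) * s i x p * cnj (s i y p'))"
        by (simp add: sum_distrib_left sum_distrib_right algebra_simps)
      also have "\<dots> = (\<Sum>i<k. \<Sum>x<dL i. \<Sum>u<dR i. \<Sum>y<dL i. Y $$ (idx i x u, idx i y u) * s i x p * cnj (s i y p'))"
        by (rule sum.cong[OF refl], rule sum.cong[OF refl], rule sum.swap)
      finally show "chi_trace a b \<chi> X $$ (p,p') = (U * alg_trace k dL dR V X * adj U) $$ (p,p')"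
        using L by simp
    qed (use Uc in \<open>auto simp: chi_trace_def ptrace_right_def\<close>)
  qed
  show ?thesis using iso tr by blast
qed

end

theorem mainTheorem3:
  fixes n a b k :: nat and \<chi> V :: "complex mat" and \<B> :: "complex mat set"
    and dL dR :: "nat \<Rightarrow> nat"
  assumes "vn_algebra n \<B>"
    and "splitting_map n a b \<chi>"
    and "lean n a b \<chi>"
    and "stloc_R n a b \<chi> = \<B>"
    and "AW_decomposition n \<B> k dL dR V"
  shows "\<exists>U. isometry a (\<Sum>i<k. dL i) U \<and>
           (\<forall>X \<in> carrier_mat n n. chi_trace a b \<chi> X = U * alg_trace k dL dR V X * adj U)"
proof -
  interpret setting n a b k \<chi> V \<B> dL dR
    by (intro setting.intro assms)
  show ?thesis by (rule final)
qed

end
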